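(* Let $q$ be a power of an odd prime, let $d\geq 3$ be odd, and let $E,F\subset \mathbb F_q^d$ be nonempty. Then $$ |\Delta(E,F)|\geq \begin{cases} \min \left\{ \frac{q}{2}, \frac{|E||F|}{8q^{d-1}}\right\} &\text{if } 1\leq |E|< q^{\frac{d-1}{2}},\\[2pt] \min \left\{ \frac{q}{2}, \frac{|F|}{8q^{\frac{d-1}{2}}}\right\} &\text{if } q^{\frac{d-1}{2}}\leq |E|< q^{\frac{d+1}{2}},\\[2pt] \min \left\{ \frac{q}{2}, \frac{|E||F|}{2q^{d}}\right\} &\text{if } q^{\frac{d+1}{2}} \leq |E|\leq q^{d}. \end{cases}$$
   Context: $\mathbb F_q$ is the finite field with $q$ elements, of characteristic greater than two. For $m=(m_1,\dots,m_d)\in\mathbb F_q^d$ put $\|m\|=m_1^2+\dots+m_d^2\in\mathbb F_q$. For $E,F\subset\mathbb F_q^d$ the distance set is $\Delta(E,F)=\{\|x-y\|\in\mathbb F_q: x\in E,\ y\in F\}$. *)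

theory Defs
  imports "HOL-Analysis.Analysis"
begin

definition ffnorm :: "('a::comm_ring_1) ^ 'n \<Rightarrow> 'a" where
  "ffnorm m = (\<Sum>i\<in>UNIV. (m $ i) ^ 2)"

definition dist_set :: "(('a::comm_ring_1) ^ 'n) set \<Rightarrow> ('a ^ 'n) set \<Rightarrow> 'a set" where
  "dist_set E F = {ffnorm (x - y) | x y. x \<in> E \<and> y \<in> F}"

end

theory Submission
  imports Defs
begin

definition subgrp :: "'a::ring_1 set \<Rightarrow> bool" where
  "subgrp S \<longleftrightarrow> 0 \<in> S \<and> (\<forall>x\<in>S. \<forall>y\<in>S. x + y \<in> S) \<and> (\<forall>x\<in>S. -x \<in> S)"

lemma subgrp_of_nat:
  assumes "subgrp S" "h \<in> S" shows "of_nat n * h \<in> S"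
proof (induction n)
  case 0 then show ?case using assms by (simp add: subgrp_def)
next
  case (Suc n)
  have "of_nat (Suc n) * h = h + of_nat n * h" by (simp add: algebra_simps)
  then show ?case using Suc assms by (simp add: subgrp_def)
qed

lemma subgrp_of_int:
  assumes "subgrp S" "h \<in> S" shows "of_int k * h \<in> S"
proof (cases "k \<ge> 0")
  case True
  then obtain n where "k = int n" by (metis nonneg_eq_int)
  then show ?thesis using subgrp_of_nat[OF assms, of n] by simp
next
  case False
  then obtain n where "k = - int n" by (intro that[of "nat (-k)"]) simp
  then show ?thesis using subgrp_of_nat[OF assms, of n] assms(1) by (simp add: subgrp_def)
qed

lemma exists_char:
  shows "\<exists>chi::'a::{field,finite} \<Rightarrow> complex. (\<forall>x y. chi (x+y) = chi x * chi y)
            \<and> (\<forall>x. norm (chi x) = 1) \<and> (\<exists>g. chi g \<noteq> 1)"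
proof -
  define p where "p = CHAR('a)"
  have p0: "p > 0" unfolding p_def by (rule finite_imp_CHAR_pos) simp
  have pp: "prime p" unfolding p_def using p0[unfolded p_def] by (rule prime_CHAR_semidom)
  define P where "P = (\<lambda>K::'a set. subgrp K \<and> K \<noteq> UNIV)"
  have P0: "P {0}" proof -
    have "(1::'a) \<notin> {0}" by simp
    then have "{0::'a} \<noteq> UNIV" by blast
    then show ?thesis unfolding P_def subgrp_def by simp
  qed
  have "\<forall>K. P K \<longrightarrow> card K < CARD('a) + 1"
    by (simp add: card_mono less_Suc_eq_le)
  from ex_has_greatest_nat[of P "{0}" card, OF P0 this]
  obtain H where PH: "P H" and Hmax: "\<And>K. P K \<Longrightarrow> card K \<le> card H" by blast
  have sH: "subgrp H" and HU: "H \<noteq> UNIV" using PH by (auto simp: P_def)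
  obtain g where gH: "g \<notin> H" using HU by blast
  define H' where "H' = {h + of_int k * g | h k. h \<in> H}"
  have sH': "subgrp H'" unfolding subgrp_def
  proof (intro conjI ballI)
    have "(0::'a) = 0 + of_int 0 * g" "(0::'a) \<in> H" using sH by (auto simp: subgrp_def)
    then show "0 \<in> H'" unfolding H'_def by blast
  next
    fix x y assume "x \<in> H'" "y \<in> H'"
    then obtain h1 k1 h2 k2 where "h1 \<in> H" "h2 \<in> H" "x = h1 + of_int k1 * g" "y = h2 + of_int k2 * g"
      unfolding H'_def by blast
    then have "x + y = (h1 + h2) + of_int (k1 + k2) * g" "h1 + h2 \<in> H"
      using sH by (auto simp: algebra_simps subgrp_def)
    then show "x + y \<in> H'" unfolding H'_def by blast
  next
    fix x assume "x \<in> H'"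
    then obtain h1 k1 where "h1 \<in> H" "x = h1 + of_int k1 * g"
      unfolding H'_def by blast
    then have "-x = (-h1) + of_int (-k1) * g" "-h1 \<in> H"
      using sH by (auto simp: algebra_simps subgrp_def)
    then show "-x \<in> H'" unfolding H'_def by blast
  qed
  have HH': "H \<subseteq> H'"
  proof
    fix x assume "x \<in> H"
    moreover have "x = x + of_int 0 * g" by simp
    ultimately show "x \<in> H'" unfolding H'_def by blast
  qed
  have gH': "g \<in> H'"
  proof -
    have "g = 0 + of_int 1 * g" "(0::'a) \<in> H" using sH by (auto simp: subgrp_def)
    then show ?thesis unfolding H'_def by blast
  qed
  have "H' = UNIV"
  proof (rule ccontr)
    assume "H' \<noteq> UNIV"
    then have "card H' \<le> card H" using Hmax sH' P_def by blast
    moreover have "card H < card H'" using HH' gH gH' by (intro psubset_card_mono) auto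
    ultimately show False by simp
  qed
  then have rep: "\<And>x. \<exists>h\<in>H. \<exists>k. x = h + of_int k * g" unfolding H'_def by blast
  have uniq: "int p dvd (a - b)" if "h1 \<in> H" "h2 \<in> H" "h1 + of_int a * g = h2 + of_int b * g" for h1 h2 a b
  proof (rule ccontr)
    assume nd: "\<not> int p dvd (a - b)"
    have "prime (int p)" using pp by simp
    then have "coprime (int p) (a - b)" using nd by (simp add: prime_imp_coprime)
    then have g1: "gcd (int p) (a - b) = 1" by simp
    obtain v u where "v * int p + u * (a - b) = gcd (int p) (a - b)" using bezout_int by blast
    then have uv: "u * (a - b) + v * int p = 1" using g1 by simp
    have "of_int (a - b) * g = h2 - h1" using that(3) by (simp add: algebra_simps)
    also have "\<dots> \<in> H" using that(1,2) sH by (metis diff_conv_add_uminus subgrp_def)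
    finally have "of_int u * (of_int (a - b) * g) \<in> H" using sH subgrp_of_int by blast
    moreover have "of_int u * (of_int (a - b) * g) = g"
    proof -
      have "of_int u * (of_int (a - b) * g) = of_int (u * (a - b)) * g"
        by (simp only: of_int_mult mult.assoc)
      also have "u * (a - b) = 1 - v * int p" using uv by linarith
      also have "of_int (1 - v * int p) * g = g - of_int v * (of_nat p * g)"
        by (simp add: algebra_simps)
      also have "(of_nat p :: 'a) = 0" using p_def by simp
      finally show ?thesis by simp
    qed
    ultimately show False using gH by metis
  qed
  define k where "k x = (SOME k. \<exists>h\<in>H. x = h + of_int k * g)" for x
  have kx: "\<exists>h\<in>H. x = h + of_int (k x) * g" for x
  proof -
    have "\<exists>k. \<exists>h\<in>H. x = h + of_int k * g" using rep[of x] by blast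
    from someI_ex[OF this] show ?thesis unfolding k_def .
  qed
  define c where "c = 2 * complex_of_real pi * \<i> / of_nat p"
  define chi where "chi x = exp (c * of_int (k x))" for x
  have cp: "exp (c * of_int (int p * t)) = 1" for t
  proof -
    have "c * of_int (int p * t) = complex_of_real (2 * real_of_int t * pi) * \<i>"
      using p0 by (simp add: c_def field_simps)
    then show ?thesis by (subst \<open>c * _ = _\<close>, intro exp_integer_2pi) simp
  qed
  have add: "chi (x + y) = chi x * chi y" for x y
  proof -
    obtain h1 where h1: "h1 \<in> H" "x = h1 + of_int (k x) * g" using kx by blast
    obtain h2 where h2: "h2 \<in> H" "y = h2 + of_int (k y) * g" using kx by blast
    obtain h3 where h3: "h3 \<in> H" "x + y = h3 + of_int (k (x+y)) * g" using kx by blast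
    have "h1 + h2 \<in> H" using h1 h2 sH by (simp add: subgrp_def)
    moreover have "(h1 + h2) + of_int (k x + k y) * g = x + y"
      by (subst h1(2), subst h2(2)) (simp add: algebra_simps)
    then have "(h1 + h2) + of_int (k x + k y) * g = h3 + of_int (k (x+y)) * g"
      using h3(2) by simp
    ultimately have "int p dvd (k x + k y - k (x+y))" using uniq h3 by blast
    then obtain t where t: "k (x+y) = k x + k y - int p * t" by (metis dvd_def diff_diff_eq2 diff_add_cancel add_diff_cancel_left')
    have "chi (x+y) = exp (c * of_int (k x) + c * of_int (k y) + c * of_int (int p * (-t)))"
      unfolding chi_def t by (simp add: algebra_simps)
    also have "\<dots> = chi x * chi y" unfolding chi_def exp_add cp by simp
    finally show ?thesis .
  qed
  have nrm: "norm (chi x) = 1" for x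
    unfolding chi_def norm_exp_eq_Re by (simp add: c_def)
  have "chi g \<noteq> 1"
  proof
    assume a: "chi g = 1"
    obtain h where h: "h \<in> H" "g = h + of_int (k g) * g" using kx by blast
    have "0 + of_int 1 * g = h + of_int (k g) * g" using h by simp
    then have d1: "int p dvd (1 - k g)" using uniq h sH by (meson subgrp_def)
    from a obtain n where "Im (c * of_int (k g)) = real_of_int (2 * n) * pi"
      unfolding chi_def exp_eq_1 by blast
    then have "2 * pi * k g / p = 2 * n * pi" by (simp add: c_def)
    then have "real_of_int (k g) = real_of_int (n * int p)" using p0 by (simp add: field_simps)
    then have "k g = n * int p" by (simp only: of_int_eq_iff)
    then have "int p dvd k g" by simp
    with d1 have "int p dvd 1" using dvd_add by fastforce
    then show False using pp by (simp add: prime_gt_1_nat)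
  qed
  then show ?thesis using add nrm by blast
qed

definition sq :: "'a::field \<Rightarrow> bool" where "sq x \<longleftrightarrow> (\<exists>y. x = y * y)"

definition eta :: "'a::field \<Rightarrow> complex" where
  "eta x = (if x = 0 then 0 else if sq x then 1 else -1)"

locale fchar =
  fixes chi :: "'a::{field,finite} \<Rightarrow> complex"
  assumes chi_add: "chi (x + y) = chi x * chi y"
      and chi_norm: "norm (chi x) = 1"
      and chi_nontriv: "\<exists>g. chi g \<noteq> 1"
      and two_nz: "(2::'a) \<noteq> 0"
begin

lemma four_nz: "(4::'a) \<noteq> 0"
proof -
  have "(4::'a) = 2 * 2" by simp
  then show ?thesis using two_nz mult_eq_0_iff by metis
qed

lemma chi_nz: "chi x \<noteq> 0"
  using chi_norm[of x] by auto

lemma chi_0: "chi 0 = 1"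
proof -
  have "chi 0 * chi 0 = chi 0 * 1" using chi_add[of 0 0] by simp
  then show ?thesis using chi_nz[of 0] by (metis mult_left_cancel)
qed

lemma chi_cnj: "chi x * cnj (chi x) = 1"
proof -
  have "chi x * cnj (chi x) = complex_of_real ((cmod (chi x))\<^sup>2)"
    by (rule complex_norm_square[symmetric])
  then show ?thesis by (simp add: chi_norm)
qed

lemma chi_neg: "chi (-x) = cnj (chi x)"
proof -
  have "chi x * chi (-x) = 1" using chi_add[of x "-x"] chi_0 by simp
  then have "chi x * chi (-x) = chi x * cnj (chi x)" using chi_cnj by simp
  then show ?thesis using chi_nz[of x] by (metis mult_left_cancel)
qed

lemma chi_diff: "chi (x - y) = chi x * cnj (chi y)"
  using chi_add[of x "-y"] chi_neg[of y] by simp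

lemma chi_sum: "chi (\<Sum>i\<in>I. f i) = (\<Prod>i\<in>I. chi (f i))"
proof (induction I rule: infinite_finite_induct)
  case (infinite A) then show ?case by (simp add: chi_0)
next
  case empty then show ?case by (simp add: chi_0)
next
  case (insert x F) then show ?case by (simp add: chi_add)
qed

lemma sum_chi: "(\<Sum>x\<in>UNIV. chi x) = 0"
proof -
  obtain g where g: "chi g \<noteq> 1" using chi_nontriv by blast
  have "(\<Sum>x\<in>UNIV. chi (x + g)) = (\<Sum>x\<in>UNIV. chi x)"
    by (rule sum.reindex_bij_witness[of _ "\<lambda>x. x - g" "\<lambda>x. x + g"]) auto
  moreover have "(\<Sum>x\<in>UNIV. chi (x + g)) = chi g * (\<Sum>x\<in>UNIV. chi x)"
    by (simp add: chi_add sum_distrib_left mult.commute)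
  ultimately have "(chi g - 1) * (\<Sum>x\<in>UNIV. chi x) = 0" by (simp add: algebra_simps)
  then show ?thesis using g by simp
qed

lemma sum_chi_nz: "(\<Sum>x\<in>-{0}. chi x) = -1"
proof -
  have "(\<Sum>x\<in>UNIV. chi x) = chi 0 + (\<Sum>x\<in>-{0}. chi x)"
    by (metis Compl_eq_Diff_UNIV UNIV_I finite sum.remove)
  then show ?thesis using sum_chi chi_0 by (simp add: eq_neg_iff_add_eq_0 add.commute)
qed

lemma orth: "(\<Sum>x\<in>UNIV. chi (c * x)) = (if c = 0 then of_nat CARD('a) else 0)"
proof (cases "c = 0")
  case True then show ?thesis by (simp add: chi_0)
next
  case False
  have "(\<Sum>x\<in>UNIV. chi (c * x)) = (\<Sum>x\<in>UNIV. chi x)"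
    by (rule sum.reindex_bij_witness[of _ "\<lambda>x. x / c" "\<lambda>x. c * x"]) (use False in auto)
  then show ?thesis using False sum_chi by simp
qed

lemma orth': "(\<Sum>x\<in>UNIV. chi (x * c)) = (if c = 0 then of_nat CARD('a) else 0)"
  using orth[of c] by (simp add: mult.commute)

lemma indicator_chi:
  "(\<Sum>s\<in>UNIV. chi (s * (a - b))) = (if a = b then of_nat CARD('a) else 0)"
  using orth'[of "a - b"] by (simp add: mult.commute)

subsection \<open>Quadratic character\<close>

lemma eta_0 [simp]: "eta 0 = 0" by (simp add: eta_def)

lemma card_sqrt: "card {y::'a. y * y = x} = (if x = 0 then 1 else if sq x then 2 else 0)"
proof -
  consider "x = 0" | "x \<noteq> 0" "sq x" | "\<not> sq x" by blast
  then show ?thesis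
  proof cases
    case 1
    then have "{y::'a. y * y = x} = {0}" by auto
    then show ?thesis using 1 by simp
  next
    case 2
    then obtain a where a: "x = a * a" by (auto simp: sq_def)
    then have a0: "a \<noteq> 0" using 2 by auto
    have "{y::'a. y * y = x} = {a, -a}"
    proof (rule set_eqI, rule iffI)
      fix y assume "y \<in> {y. y * y = x}"
      then have "(y - a) * (y + a) = 0" using a by (simp add: algebra_simps)
      then show "y \<in> {a, -a}" by (auto simp: eq_neg_iff_add_eq_0)
    next
      fix y assume "y \<in> {a, -a}"
      then have "y = a \<or> y = -a" by simp
      then show "y \<in> {y. y * y = x}" unfolding a by auto
    qed
    moreover have "a \<noteq> -a"
    proof
      assume h: "a = -a"
      have "a + a = -a + a" using h by (rule arg_cong)
      then have "a + a = 0" by simp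
      then have "2 * a = 0" by (simp only: mult_2)
      then show False using a0 two_nz by simp
    qed
    ultimately show ?thesis using 2 by simp
  next
    case 3
    then have "{y::'a. y * y = x} = {}" by (auto simp: sq_def)
    then show ?thesis using 3 by (auto simp: sq_def)
  qed
qed

lemma card_sqrt_eta: "of_nat (card {y::'a. y * y = x}) = 1 + eta x"
  by (simp add: card_sqrt eta_def)

lemma card_sqrt_le2: "card {y::'a. y * y = x} \<le> 2"
  by (simp add: card_sqrt)

lemma sum_squares: "(\<Sum>x\<in>UNIV. f (x * x)) = (\<Sum>y\<in>UNIV. (1 + eta y) * f (y::'a))"
proof -
  have "(\<Sum>x\<in>UNIV. f (x * x)) = (\<Sum>y\<in>UNIV. \<Sum>x\<in>{x\<in>UNIV. x * x = y}. f (x * x))"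
    by (rule sum.group[symmetric]) auto
  also have "\<dots> = (\<Sum>y\<in>UNIV. (1 + eta y) * f y)"
  proof (rule sum.cong)
    fix y :: 'a
    have "(\<Sum>x\<in>{x\<in>UNIV. x * x = y}. f (x * x)) = (\<Sum>x\<in>{x. x * x = y}. f y)" by simp
    also have "\<dots> = of_nat (card {x. x * x = y}) * f y" by simp
    finally show "(\<Sum>x\<in>{x\<in>UNIV. x * x = y}. f (x * x)) = (1 + eta y) * f y"
      by (simp only: card_sqrt_eta)
  qed simp
  finally show ?thesis .
qed

lemma sum_eta: "(\<Sum>y\<in>UNIV. eta (y::'a)) = 0"
proof -
  have "(\<Sum>x\<in>(UNIV::'a set). (1::complex)) = (\<Sum>y\<in>(UNIV::'a set). (1 + eta y) * 1)"
    using sum_squares[of "\<lambda>_. (1::complex)"] by simp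
  then show ?thesis by (simp add: sum.distrib)
qed

lemma eta_cases: "eta (x::'a) = 0 \<or> eta x = 1 \<or> eta x = -1"
  by (simp add: eta_def)

lemma eta_sq_mult: "(y::'a) \<noteq> 0 \<Longrightarrow> eta (y * y * x) = eta x"
proof -
  assume y: "y \<noteq> 0"
  have "sq (y * y * x) \<longleftrightarrow> sq x"
  proof
    assume "sq (y * y * x)"
    then obtain b where "y * y * x = b * b" by (auto simp: sq_def)
    then have "x = (b / y) * (b / y)" using y by (simp add: field_simps)
    then show "sq x" unfolding sq_def by blast
  next
    assume "sq x"
    then obtain b where "x = b * b" by (auto simp: sq_def)
    then have "y * y * x = (y * b) * (y * b)" by (simp add: algebra_simps)
    then show "sq (y * y * x)" unfolding sq_def by blast
  qed
  then show ?thesis using y by (simp add: eta_def)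
qed

lemma eta_sq [simp]: "(y::'a) \<noteq> 0 \<Longrightarrow> eta (y * y) = 1"
proof -
  assume "y \<noteq> 0"
  moreover have "sq (y * y)" unfolding sq_def by blast
  ultimately show ?thesis by (simp add: eta_def)
qed

lemma card_sq_nonsq: "card {x::'a. x \<noteq> 0 \<and> sq x} = card {x::'a. x \<noteq> 0 \<and> \<not> sq x}"
proof -
  define A where "A = {x::'a. x \<noteq> 0 \<and> sq x}"
  define B where "B = {x::'a. x \<noteq> 0 \<and> \<not> sq x}"
  have U: "(UNIV::'a set) = insert 0 (A \<union> B)" by (auto simp: A_def B_def)
  have s1: "(\<Sum>y\<in>(UNIV::'a set). eta y) = eta (0::'a) + (\<Sum>y\<in>A \<union> B. eta y)"
    unfolding U by (subst sum.insert) (auto simp: A_def B_def)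
  have s2: "(\<Sum>y\<in>A \<union> B. eta y) = (\<Sum>y\<in>A. eta y) + (\<Sum>y\<in>B. eta y)"
    by (subst sum.union_disjoint) (auto simp: A_def B_def)
  have s3: "(\<Sum>y\<in>A. eta y) = (\<Sum>y\<in>A. (1::complex))"
    by (rule sum.cong) (auto simp: A_def eta_def)
  have s4: "(\<Sum>y\<in>B. eta y) = (\<Sum>y\<in>B. (-1::complex))"
    by (rule sum.cong) (auto simp: B_def eta_def)
  have "of_nat (card A) - of_nat (card B) = (0::complex)"
    using sum_eta s1 s2 s3 s4 by simp
  then have "card A = card B" by simp
  then show ?thesis by (simp add: A_def B_def)
qed

lemma nonsq_nonsq:
  fixes x y :: 'a
  assumes x: "x \<noteq> 0" "\<not> sq x" and y: "y \<noteq> 0" "\<not> sq y"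
  shows "sq (x * y)"
proof -
  define A where "A = {x::'a. x \<noteq> 0 \<and> sq x}"
  define B where "B = {x::'a. x \<noteq> 0 \<and> \<not> sq x}"
  have sub: "(\<lambda>s. y * s) ` A \<subseteq> B"
  proof
    fix z assume "z \<in> (\<lambda>s. y * s) ` A"
    then obtain s where s: "s \<in> A" "z = y * s" by blast
    then obtain c where c: "s = c * c" "c \<noteq> 0" by (auto simp: A_def sq_def)
    have "\<not> sq z"
    proof
      assume "sq z"
      then obtain b where "z = b * b" by (auto simp: sq_def)
      then have "y = (b / c) * (b / c)" using s c by (simp add: field_simps)
      then show False using y(2) unfolding sq_def by blast
    qed
    moreover have "z \<noteq> 0" using s y by (auto simp: A_def)
    ultimately show "z \<in> B" by (simp add: B_def)
  qed
  have "inj_on (\<lambda>s. y * s) A" using y by (auto simp: inj_on_def)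
  then have "card ((\<lambda>s. y * s) ` A) = card B"
    using card_sq_nonsq by (simp add: card_image A_def B_def)
  then have "(\<lambda>s. y * s) ` A = B" using sub by (intro card_subset_eq) auto
  then have "x \<in> (\<lambda>s. y * s) ` A" using x by (auto simp: B_def)
  then obtain s where "s \<in> A" "x = y * s" by blast
  then obtain c where "x = y * (c * c)" by (auto simp: A_def sq_def)
  then have "x * y = (y * c) * (y * c)" by (simp add: algebra_simps)
  then show ?thesis unfolding sq_def by blast
qed

lemma eta_mult: "eta ((x::'a) * y) = eta x * eta y"
proof (cases "x = 0 \<or> y = 0")
  case True then show ?thesis by (auto simp: eta_def)
next
  case False
  then have x0: "x \<noteq> 0" and y0: "y \<noteq> 0" by auto
  consider "sq x" | "\<not> sq x" by blast
  then show ?thesis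
  proof cases
    case 1
    then obtain a where a: "x = a * a" by (auto simp: sq_def)
    then have "a \<noteq> 0" using x0 by auto
    then have "eta (x * y) = eta y" unfolding a using eta_sq_mult by simp
    then show ?thesis using 1 x0 by (simp add: eta_def)
  next
    case 2
    show ?thesis
    proof (cases "sq y")
      case True
      then obtain a where a: "y = a * a" by (auto simp: sq_def)
      then have "a \<noteq> 0" using y0 by auto
      then have "eta (x * y) = eta x" unfolding a using eta_sq_mult[of a x]
        by (simp add: mult.commute)
      then show ?thesis using True y0 by (simp add: eta_def)
    next
      case False
      then have "sq (x * y)" using nonsq_nonsq x0 y0 2 by blast
      then show ?thesis using x0 y0 2 False by (simp add: eta_def)
    qed
  qed
qed

lemma eta_sq_nz: "(x::'a) \<noteq> 0 \<Longrightarrow> eta x * eta x = 1"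
  using eta_mult[of x x] by simp

lemma eta_inverse: "eta (inverse (x::'a)) = eta x"
proof (cases "x = 0")
  case True then show ?thesis by simp
next
  case False
  have "inverse x = inverse x * inverse x * x" using False by (simp add: field_simps)
  then have "eta (inverse x) = eta (inverse x * inverse x * x)" by (rule arg_cong)
  also have "\<dots> = eta x" using False by (intro eta_sq_mult) simp
  finally show ?thesis .
qed

lemma norm_eta_le: "norm (eta (x::'a)) \<le> 1"
  by (simp add: eta_def)

subsection \<open>Gauss sums\<close>

definition G :: "'a \<Rightarrow> complex" where "G r = (\<Sum>x\<in>UNIV. chi (r * (x * x)))"

lemma G_eta: "r \<noteq> 0 \<Longrightarrow> G r = (\<Sum>y\<in>UNIV. eta y * chi (r * y))"
proof -
  assume r: "r \<noteq> 0"
  have "G r = (\<Sum>y\<in>UNIV. (1 + eta y) * chi (r * y))"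
    unfolding G_def by (rule sum_squares)
  also have "\<dots> = (\<Sum>y\<in>UNIV. chi (r * y)) + (\<Sum>y\<in>UNIV. eta y * chi (r * y))"
    by (simp add: distrib_right sum.distrib)
  also have "(\<Sum>y\<in>UNIV. chi (r * y)) = 0" using orth r by simp
  finally show ?thesis by simp
qed

lemma G_mult: "r \<noteq> 0 \<Longrightarrow> G r = eta r * G 1"
proof -
  assume r: "r \<noteq> 0"
  have "G r = (\<Sum>y\<in>UNIV. eta y * chi (r * y))" using G_eta r by simp
  also have "\<dots> = (\<Sum>v\<in>UNIV. eta (v / r) * chi v)"
    by (rule sum.reindex_bij_witness[of _ "\<lambda>v. v / r" "\<lambda>y. r * y"]) (use r in auto)
  also have "\<dots> = (\<Sum>v\<in>UNIV. eta r * (eta v * chi v))"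
    by (rule sum.cong) (auto simp: divide_inverse eta_mult eta_inverse)
  also have "\<dots> = eta r * G 1"
    using G_eta[of 1] by (simp add: sum_distrib_left)
  finally show ?thesis .
qed

lemma G_normsq: "r \<noteq> 0 \<Longrightarrow> G r * cnj (G r) = of_nat CARD('a)"
proof -
  assume r: "r \<noteq> 0"
  have "G r * cnj (G r) = (\<Sum>x\<in>UNIV. \<Sum>y\<in>UNIV. chi (r * (x * x)) * cnj (chi (r * (y * y))))"
    unfolding G_def cnj_sum sum_product by (rule refl)
  also have "\<dots> = (\<Sum>(x, y)\<in>UNIV. chi (r * ((x - y) * (x + y))))"
    unfolding sum.cartesian_product[symmetric] UNIV_Times_UNIV[symmetric]
    by (intro sum.cong refl) (simp add: chi_diff[symmetric] algebra_simps)
  also have "\<dots> = (\<Sum>(u, v)\<in>UNIV. chi (r * (u * v)))"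
    by (rule sum.reindex_bij_witness[of _ "\<lambda>(u, v). ((u + v) / 2, (v - u) / 2)"
          "\<lambda>(x, y). (x - y, x + y)"]) (auto simp: field_simps two_nz four_nz)
  also have "\<dots> = (\<Sum>u\<in>UNIV. \<Sum>v\<in>UNIV. chi ((r * u) * v))"
    unfolding UNIV_Times_UNIV[symmetric] sum.cartesian_product[symmetric] by (simp add: mult.assoc)
  also have "\<dots> = (\<Sum>u\<in>(UNIV::'a set). if u = 0 then of_nat CARD('a) else 0)"
    by (rule sum.cong) (use r orth in auto)
  also have "\<dots> = of_nat CARD('a)" by simp
  finally show ?thesis .
qed

lemma G_norm: "r \<noteq> 0 \<Longrightarrow> norm (G r) = sqrt (real CARD('a))"
proof -
  assume r: "r \<noteq> 0"
  have "complex_of_real ((norm (G r))\<^sup>2) = of_nat CARD('a)"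
    using G_normsq[OF r] by (simp only: complex_norm_square)
  then have "(norm (G r))\<^sup>2 = real CARD('a)"
    by (metis of_real_eq_iff of_real_of_nat_eq)
  then show ?thesis by (simp add: real_sqrt_unique)
qed

lemma G_complete:
  assumes r: "r \<noteq> 0"
  shows "(\<Sum>x\<in>UNIV. chi (r * (x * x) + b * x)) = G r * chi (- (b * b) / (4 * r))"
proof -
  have four: "(4::'a) \<noteq> 0" by (rule four_nz)
  have "(\<Sum>x\<in>UNIV. chi (r * (x * x) + b * x)) = (\<Sum>y\<in>UNIV. chi (r * ((y - b / (2*r)) * (y - b / (2*r))) + b * (y - b / (2*r))))"
    by (rule sum.reindex_bij_witness[of _ "\<lambda>y. y - b / (2*r)" "\<lambda>x. x + b / (2*r)"]) auto
  also have "\<dots> = (\<Sum>y\<in>UNIV. chi (r * (y * y) + (- (b * b) / (4 * r))))"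
  proof (rule sum.cong[OF refl])
    fix y
    define c where "c = b / (2 * r)"
    have bc: "b = 2 * r * c" unfolding c_def using r two_nz by simp
    have e1: "r * ((y - c) * (y - c)) + b * (y - c) = r * (y * y) + (- (r * (c * c)))"
      unfolding bc by (simp add: algebra_simps)
    have e2: "- (b * b) / (4 * r) = - (r * (c * c))"
      unfolding bc using r four_nz by (simp add: field_simps)
    show "chi (r * ((y - b / (2*r)) * (y - b / (2*r))) + b * (y - b / (2*r))) = chi (r * (y * y) + (- (b * b) / (4 * r)))"
      using e1 e2 unfolding c_def by simp
  qed
  also have "\<dots> = G r * chi (- (b * b) / (4 * r))"
    unfolding G_def sum_distrib_right chi_add by (rule refl)
  finally show ?thesis .
qed

end

context fchar
begin

lemma sum_split0: "(\<Sum>x\<in>UNIV. f x) = f (0::'a) + (\<Sum>x\<in>-{0}. f x)"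
  by (metis Compl_eq_Diff_UNIV UNIV_I finite sum.remove)

lemma card_nz: "card (-{0::'a}) = CARD('a) - 1"
  by (simp add: Compl_eq_Diff_UNIV card_Diff_singleton)

lemma sum_eta_affine:
  fixes c d :: 'a
  assumes "c \<noteq> 0" shows "(\<Sum>u\<in>UNIV. eta (c * u + d)) = 0"
proof -
  have "(\<Sum>u\<in>UNIV. eta (c * u + d)) = (\<Sum>v\<in>(UNIV::'a set). eta v)"
    by (rule sum.reindex_bij_witness[of _ "\<lambda>v. (v - d) / c" "\<lambda>u. c * u + d"]) (use assms in auto)
  then show ?thesis using sum_eta by simp
qed

lemma eta_quad_sum:
  fixes \<alpha> \<beta> :: 'a
  assumes a: "\<alpha> \<noteq> 0"
  shows "(\<Sum>x\<in>UNIV. eta (\<alpha> * (x * x) + \<beta>)) =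
           (if \<beta> = 0 then (of_nat CARD('a) - 1) * eta \<alpha> else - eta \<alpha>)"
proof -
  have "(\<Sum>x\<in>UNIV. eta (\<alpha> * (x * x) + \<beta>)) = (\<Sum>u\<in>UNIV. (1 + eta u) * eta (\<alpha> * u + \<beta>))"
    by (rule sum_squares)
  also have "\<dots> = (\<Sum>u\<in>UNIV. eta (\<alpha> * u + \<beta>)) + (\<Sum>u\<in>UNIV. eta u * eta (\<alpha> * u + \<beta>))"
    by (simp add: distrib_right sum.distrib)
  also have "(\<Sum>u\<in>UNIV. eta (\<alpha> * u + \<beta>)) = 0" using sum_eta_affine a by blast
  finally have eq: "(\<Sum>x\<in>UNIV. eta (\<alpha> * (x * x) + \<beta>)) = (\<Sum>u\<in>UNIV. eta u * eta (\<alpha> * u + \<beta>))"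
    by simp
  show ?thesis
  proof (cases "\<beta> = 0")
    case True
    have "(\<Sum>u\<in>UNIV. eta u * eta (\<alpha> * u + \<beta>)) = (\<Sum>u\<in>(UNIV::'a set). eta \<alpha> * (eta u * eta u))"
      using True by (intro sum.cong refl) (simp add: eta_mult)
    also have "\<dots> = eta \<alpha> * (\<Sum>u\<in>-{0::'a}. eta u * eta u)"
      by (simp add: sum_distrib_left[symmetric] sum_split0[of "\<lambda>u. eta u * eta u"])
    also have "(\<Sum>u\<in>-{0::'a}. eta u * eta u) = (\<Sum>u\<in>-{0::'a}. 1)"
      by (rule sum.cong) (auto simp: eta_sq_nz)
    also have "\<dots> = of_nat CARD('a) - 1"
      using card_nz by (simp add: of_nat_diff)
    finally show ?thesis using eq True by (simp add: mult.commute)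
  next
    case False
    have "(\<Sum>u\<in>UNIV. eta u * eta (\<alpha> * u + \<beta>)) = (\<Sum>u\<in>-{0}. eta u * eta (\<alpha> * u + \<beta>))"
      by (simp add: sum_split0[of "\<lambda>u. eta u * eta (\<alpha> * u + \<beta>)"])
    also have "\<dots> = (\<Sum>u\<in>-{0}. eta (\<alpha> + \<beta> * inverse u))"
    proof (rule sum.cong[OF refl])
      fix u :: 'a assume "u \<in> -{0}"
      then have u: "u \<noteq> 0" by simp
      have "\<alpha> * u + \<beta> = u * (\<alpha> + \<beta> * inverse u)" using u by (simp add: field_simps)
      then have "eta (\<alpha> * u + \<beta>) = eta u * eta (\<alpha> + \<beta> * inverse u)"
        by (simp add: eta_mult)
      then show "eta u * eta (\<alpha> * u + \<beta>) = eta (\<alpha> + \<beta> * inverse u)"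
        using eta_sq_nz[OF u] by (simp add: mult.assoc[symmetric])
    qed
    also have "\<dots> = (\<Sum>w\<in>-{0}. eta (\<alpha> + \<beta> * w))"
      by (rule sum.reindex_bij_witness[of _ inverse inverse]) auto
    also have "\<dots> = (\<Sum>w\<in>UNIV. eta (\<alpha> + \<beta> * w)) - eta \<alpha>"
      using sum_split0[of "\<lambda>w. eta (\<alpha> + \<beta> * w)"] by simp
    also have "(\<Sum>w\<in>UNIV. eta (\<alpha> + \<beta> * w)) = 0"
      using sum_eta_affine[OF False, of \<alpha>] by (simp add: add.commute)
    finally show ?thesis using eq False by simp
  qed
qed

lemma kloost_count:
  fixes \<alpha> b y :: 'a
  assumes b: "b \<noteq> 0" and a: "\<alpha> \<noteq> 0"
  shows "card {r\<in>-{0}. \<alpha> * r + b / r = y} = card {w. w * w = y * y - 4 * \<alpha> * b}"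
proof (rule bij_betw_same_card[of "\<lambda>r. 2 * \<alpha> * r - y"], rule bij_betw_byWitness[of _ "\<lambda>w. (w + y) / (2 * \<alpha>)"])
  show "\<forall>r\<in>{r \<in> - {0}. \<alpha> * r + b / r = y}. (2 * \<alpha> * r - y + y) / (2 * \<alpha>) = r"
    using a two_nz by auto
  show "\<forall>w\<in>{w. w * w = y * y - 4 * \<alpha> * b}. 2 * \<alpha> * ((w + y) / (2 * \<alpha>)) - y = w"
    using a two_nz by auto
  show "(\<lambda>r. 2 * \<alpha> * r - y) ` {r \<in> - {0}. \<alpha> * r + b / r = y} \<subseteq> {w. w * w = y * y - 4 * \<alpha> * b}"
  proof
    fix w assume "w \<in> (\<lambda>r. 2 * \<alpha> * r - y) ` {r \<in> - {0}. \<alpha> * r + b / r = y}"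
    then obtain r where r: "r \<noteq> 0" "\<alpha> * r + b / r = y" and w: "w = 2 * \<alpha> * r - y" by auto
    have h: "\<alpha> * r * r + b = y * r"
    proof -
      have "(\<alpha> * r + b / r) * r = y * r" using r by simp
      then show ?thesis using r by (simp add: field_simps)
    qed
    have "(2 * \<alpha> * r - y) * (2 * \<alpha> * r - y) - (y * y - 4 * \<alpha> * b) = 4 * \<alpha> * (\<alpha> * r * r + b - y * r)"
      by (simp add: algebra_simps)
    also have "\<dots> = 0" using h by simp
    finally show "w \<in> {w. w * w = y * y - 4 * \<alpha> * b}" using w by simp
  qed
  show "(\<lambda>w. (w + y) / (2 * \<alpha>)) ` {w. w * w = y * y - 4 * \<alpha> * b} \<subseteq> {r \<in> - {0}. \<alpha> * r + b / r = y}"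
  proof
    fix r assume "r \<in> (\<lambda>w. (w + y) / (2 * \<alpha>)) ` {w. w * w = y * y - 4 * \<alpha> * b}"
    then obtain w where w: "w * w = y * y - 4 * \<alpha> * b" and r: "r = (w + y) / (2 * \<alpha>)" by auto
    have r2: "2 * \<alpha> * r = w + y" using r a two_nz by simp
    have "4 * \<alpha> * (\<alpha> * r * r - y * r + b) = (2 * \<alpha> * r) * (2 * \<alpha> * r) - 2 * y * (2 * \<alpha> * r) + 4 * \<alpha> * b"
      by (simp add: algebra_simps)
    also have "\<dots> = (w + y) * (w + y) - 2 * y * (w + y) + 4 * \<alpha> * b" unfolding r2 by simp
    also have "\<dots> = w * w - (y * y - 4 * \<alpha> * b)" by (simp add: algebra_simps)
    also have "\<dots> = 0" using w by simp
    finally have "4 * \<alpha> * (\<alpha> * r * r - y * r + b) = 0" .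
    then have q0: "\<alpha> * r * r - y * r + b = 0" using a four_nz by simp
    have rnz: "r \<noteq> 0"
    proof
      assume "r = 0"
      then have "b = 0" using q0 by simp
      then show False using b by simp
    qed
    have "\<alpha> * r + b / r = (\<alpha> * r * r + b) / r" using rnz by (simp add: field_simps)
    also have "\<alpha> * r * r + b = y * r" using q0 by (simp add: algebra_simps)
    finally have "\<alpha> * r + b / r = y" using rnz by simp
    then show "r \<in> {r \<in> - {0}. \<alpha> * r + b / r = y}" using rnz by simp
  qed
qed

lemma kloost:
  fixes \<alpha> b :: 'a
  assumes b: "b \<noteq> 0"
  shows "(\<Sum>r\<in>-{0}. chi (\<alpha> * r + b / r)) = (\<Sum>y\<in>UNIV. chi y * (1 + eta (y * y - 4 * \<alpha> * b)))"
proof (cases "\<alpha> = 0")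
  case True
  have "(\<Sum>r\<in>-{0}. chi (\<alpha> * r + b / r)) = (\<Sum>r\<in>-{0}. chi (b / r))" using True by simp
  also have "\<dots> = (\<Sum>v\<in>-{0}. chi v)"
    by (rule sum.reindex_bij_witness[of _ "\<lambda>v. b / v" "\<lambda>r. b / r"]) (use b in auto)
  also have "\<dots> = -1" by (rule sum_chi_nz)
  finally have l: "(\<Sum>r\<in>-{0}. chi (\<alpha> * r + b / r)) = -1" .
  have "(\<Sum>y\<in>UNIV. chi y * (1 + eta (y * y - 4 * \<alpha> * b))) = (\<Sum>y\<in>UNIV. chi y) + (\<Sum>y\<in>UNIV. chi y * eta (y * y))"
    using True by (simp add: distrib_left sum.distrib)
  also have "(\<Sum>y\<in>UNIV. chi y * eta (y * y)) = (\<Sum>y\<in>-{0}. chi y)"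
    by (simp add: sum_split0[of "\<lambda>y. chi y * eta (y * y)"])
  finally show ?thesis using l sum_chi sum_chi_nz by simp
next
  case False
  have "(\<Sum>r\<in>-{0}. chi (\<alpha> * r + b / r)) = (\<Sum>y\<in>UNIV. \<Sum>r\<in>{r\<in>-{0}. \<alpha> * r + b / r = y}. chi (\<alpha> * r + b / r))"
    by (rule sum.group[symmetric]) auto
  also have "\<dots> = (\<Sum>y\<in>UNIV. chi y * (1 + eta (y * y - 4 * \<alpha> * b)))"
  proof (rule sum.cong[OF refl])
    fix y
    have "(\<Sum>r\<in>{r\<in>-{0}. \<alpha> * r + b / r = y}. chi (\<alpha> * r + b / r)) = (\<Sum>r\<in>{r\<in>-{0}. \<alpha> * r + b / r = y}. chi y)"
      by (rule sum.cong) auto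
    also have "\<dots> = of_nat (card {r\<in>-{0}. \<alpha> * r + b / r = y}) * chi y" by simp
    also have "card {r\<in>-{0}. \<alpha> * r + b / r = y} = card {w. w * w = y * y - 4 * \<alpha> * b}"
      using kloost_count b False by blast
    finally show "(\<Sum>r\<in>{r\<in>-{0}. \<alpha> * r + b / r = y}. chi (\<alpha> * r + b / r)) = chi y * (1 + eta (y * y - 4 * \<alpha> * b))"
      by (simp add: card_sqrt_eta mult.commute)
  qed
  finally show ?thesis .
qed

lemma salie_bound:
  fixes a b :: 'a
  shows "norm (\<Sum>r\<in>UNIV. eta r * chi (a * r + b / r)) \<le> 2 * sqrt (real CARD('a))"
proof (cases "b = 0")
  case True
  show ?thesis
  proof (cases "a = 0")
    case True
    then show ?thesis using \<open>b = 0\<close> sum_eta by (simp add: chi_0)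
  next
    case False
    have "(\<Sum>r\<in>UNIV. eta r * chi (a * r + b / r)) = G a" using G_eta[OF False] \<open>b = 0\<close> by simp
    then show ?thesis using G_norm[OF False] by simp
  qed
next
  case False
  define q where "q = CARD('a)"
  define T where "T = {y::'a. y * y = 4 * a * b}"
  define Sab where "Sab = (\<Sum>r\<in>UNIV. eta r * chi (a * r + b / r))"
  have mb: "- 4 * b \<noteq> 0" using False four_nz by simp
  have "G 1 * Sab = (\<Sum>r\<in>-{0}. G r * chi (a * r + b / r))"
  proof -
    have "G 1 * Sab = (\<Sum>r\<in>UNIV. G 1 * (eta r * chi (a * r + b / r)))"
      unfolding Sab_def by (rule sum_distrib_left)
    also have "\<dots> = G 1 * (eta (0::'a) * chi (a * 0 + b / 0)) + (\<Sum>r\<in>-{0}. G 1 * (eta r * chi (a * r + b / r)))"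
      by (rule sum_split0[of "\<lambda>r. G 1 * (eta r * chi (a * r + b / r))"])
    also have "\<dots> = (\<Sum>r\<in>-{0}. G 1 * (eta r * chi (a * r + b / r)))"
      by simp
    also have "\<dots> = (\<Sum>r\<in>-{0}. G r * chi (a * r + b / r))"
    proof (rule sum.cong[OF refl])
      fix r :: 'a assume "r \<in> -{0}"
      then have "G r = eta r * G 1" by (intro G_mult) simp
      then show "G 1 * (eta r * chi (a * r + b / r)) = G r * chi (a * r + b / r)" by simp
    qed
    finally show ?thesis .
  qed
  also have "\<dots> = (\<Sum>r\<in>-{0}. \<Sum>x\<in>UNIV. chi ((x * x + a) * r + b / r))"
    unfolding G_def sum_distrib_right
    by (intro sum.cong refl) (simp add: chi_add[symmetric] algebra_simps)
  also have "\<dots> = (\<Sum>x\<in>UNIV. \<Sum>r\<in>-{0}. chi ((x * x + a) * r + b / r))"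
    by (rule sum.swap)
  also have "\<dots> = (\<Sum>x\<in>UNIV. \<Sum>y\<in>UNIV. chi y * (1 + eta (y * y - 4 * (x * x + a) * b)))"
    by (intro sum.cong refl kloost False)
  also have "\<dots> = (\<Sum>y\<in>UNIV. chi y * (\<Sum>x\<in>UNIV. (1 + eta (y * y - 4 * (x * x + a) * b))))"
    by (subst sum.swap) (simp add: sum_distrib_left)
  also have "\<dots> = (\<Sum>y\<in>UNIV. chi y * ((of_nat q - eta (- 4 * b)) + (if y \<in> T then of_nat q * eta (- 4 * b) else 0)))"
  proof (rule sum.cong[OF refl])
    fix y :: 'a
    have e: "\<And>x. y * y - 4 * (x * x + a) * b = (- 4 * b) * (x * x) + (y * y - 4 * a * b)"
      by (simp add: algebra_simps)
    have "(\<Sum>x\<in>UNIV. (1 + eta (y * y - 4 * (x * x + a) * b))) = of_nat q + (\<Sum>x\<in>UNIV. eta ((- 4 * b) * (x * x) + (y * y - 4 * a * b)))"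
      unfolding e by (simp add: sum.distrib q_def)
    also have "\<dots> = (of_nat q - eta (- 4 * b)) + (if y \<in> T then of_nat q * eta (- 4 * b) else 0)"
      unfolding eta_quad_sum[OF mb] T_def q_def by (auto simp: algebra_simps)
    finally show "chi y * (\<Sum>x\<in>UNIV. (1 + eta (y * y - 4 * (x * x + a) * b))) = chi y * ((of_nat q - eta (- 4 * b)) + (if y \<in> T then of_nat q * eta (- 4 * b) else 0))"
      by simp
  qed
  also have "\<dots> = (of_nat q - eta (- 4 * b)) * (\<Sum>y\<in>UNIV. chi y) + of_nat q * eta (- 4 * b) * (\<Sum>y\<in>T. chi y)"
  proof -
    have "(\<Sum>y\<in>UNIV. chi y * (if y \<in> T then of_nat q * eta (- 4 * b) else 0)) = (\<Sum>y\<in>T. chi y * (of_nat q * eta (- 4 * b)))"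
    proof -
      have "(\<Sum>y\<in>UNIV. chi y * (if y \<in> T then of_nat q * eta (- 4 * b) else 0)) = (\<Sum>y\<in>UNIV. if y \<in> T then chi y * (of_nat q * eta (- 4 * b)) else 0)"
        by (rule sum.cong) auto
      also have "\<dots> = (\<Sum>y\<in>UNIV \<inter> T. chi y * (of_nat q * eta (- 4 * b)))"
        by (rule sum.inter_restrict[symmetric]) simp
      finally show ?thesis by simp
    qed
    then show ?thesis
      by (simp add: distrib_left sum.distrib sum_distrib_left sum_distrib_right mult.commute mult.left_commute)
  qed
  also have "\<dots> = of_nat q * eta (- 4 * b) * (\<Sum>y\<in>T. chi y)" using sum_chi by simp
  finally have eqG: "G 1 * Sab = of_nat q * eta (- 4 * b) * (\<Sum>y\<in>T. chi y)" .
  have "norm (\<Sum>y\<in>T. chi y) \<le> (\<Sum>y\<in>T. norm (chi y))" by (rule norm_sum)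
  also have "\<dots> = real (card T)" by (simp add: chi_norm)
  also have "\<dots> \<le> 2" unfolding T_def using card_sqrt_le2 by simp
  finally have nT: "norm (\<Sum>y\<in>T. chi y) \<le> 2" .
  have "norm (G 1 * Sab) \<le> real q * 1 * 2"
    unfolding eqG norm_mult
    by (intro mult_mono nT norm_eta_le) (auto simp: q_def)
  then have "sqrt (real q) * norm Sab \<le> 2 * real q"
    using G_norm[of 1] by (simp add: norm_mult q_def)
  moreover have "2 * real q = sqrt (real q) * (2 * sqrt (real q))" by simp
  moreover have sp: "sqrt (real q) > 0" unfolding q_def by simp
  ultimately have "sqrt (real q) * norm Sab \<le> sqrt (real q) * (2 * sqrt (real q))" by linarith
  then have "norm Sab \<le> 2 * sqrt (real q)" using sp mult_le_cancel_left_pos by blast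
  then show ?thesis by (simp add: Sab_def q_def)
qed

end

definition vdot :: "('a::comm_ring_1) ^ 'n \<Rightarrow> 'a ^ 'n \<Rightarrow> 'a" where
  "vdot m z = (\<Sum>i\<in>UNIV. m $ i * z $ i)"

lemma vdot_diff: "vdot m (x - y) = vdot m x - vdot m y"
  by (simp add: vdot_def algebra_simps sum_subtractf)

lemma vdot_neg: "vdot (- m) x = - vdot m x"
  by (simp add: vdot_def sum_negf)

lemma sum_vec_prod:
  fixes f :: "'n::finite \<Rightarrow> 'a::finite \<Rightarrow> 'c::comm_ring_1"
  shows "(\<Sum>m\<in>(UNIV::('a^'n) set). \<Prod>i\<in>UNIV. f i (m $ i)) = (\<Prod>i\<in>UNIV. \<Sum>a\<in>UNIV. f i a)"
proof -
  have "(\<Prod>i\<in>UNIV. \<Sum>a\<in>UNIV. f i a) = (\<Sum>g\<in>PiE UNIV (\<lambda>_. UNIV). \<Prod>i\<in>UNIV. f i (g i))"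
    by (rule prod_sum_PiE) auto
  also have "PiE UNIV (\<lambda>_::'n. UNIV::'a set) = UNIV" by (rule PiE_UNIV)
  also have "(\<Sum>g\<in>UNIV. \<Prod>i\<in>UNIV. f i (g i)) = (\<Sum>m\<in>(UNIV::('a^'n) set). \<Prod>i\<in>UNIV. f i (m $ i))"
    by (rule sum.reindex_bij_witness[of _ vec_nth vec_lambda]) auto
  finally show ?thesis by simp
qed

context fchar
begin

lemma chi_vdot: "chi (vdot m z) = (\<Prod>i\<in>UNIV. chi (m $ i * z $ i))"
  unfolding vdot_def by (rule chi_sum)

lemma vec_orth:
  fixes z :: "'a ^ 'n"
  shows "(\<Sum>m\<in>UNIV. chi (vdot m z)) = (if z = 0 then of_nat CARD('a) ^ CARD('n) else 0)"
proof -
  have "(\<Sum>m\<in>UNIV. chi (vdot m z)) = (\<Prod>i\<in>UNIV. \<Sum>a\<in>UNIV. chi (a * z $ i))"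
    unfolding chi_vdot by (rule sum_vec_prod)
  also have "\<dots> = (\<Prod>i\<in>UNIV. if z $ i = 0 then of_nat CARD('a) else 0)"
    by (intro prod.cong refl) (simp add: orth')
  also have "\<dots> = (if z = 0 then of_nat CARD('a) ^ CARD('n) else 0)"
  proof (cases "z = 0")
    case True then show ?thesis by simp
  next
    case False
    then obtain i where "z $ i \<noteq> 0" by (metis vec_eq_iff zero_index)
    then show ?thesis using False by (intro trans[OF prod_zero]) auto
  qed
  finally show ?thesis .
qed

lemma ffnorm_sum: "ffnorm m = (\<Sum>i\<in>UNIV. m $ i * m $ i)"
  by (simp add: ffnorm_def power2_eq_square)

lemma vec_gauss:
  fixes z :: "'a ^ 'n"
  assumes r: "r \<noteq> 0"
  shows "(\<Sum>m\<in>UNIV. chi (r * ffnorm m + vdot m z)) = G r ^ CARD('n) * chi (- ffnorm z / (4 * r))"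
proof -
  have e: "r * ffnorm m + vdot m z = (\<Sum>i\<in>UNIV. r * (m $ i * m $ i) + z $ i * m $ i)" for m :: "'a^'n"
    by (simp add: ffnorm_sum vdot_def sum_distrib_left sum.distrib mult.commute)
  have "(\<Sum>m\<in>UNIV. chi (r * ffnorm m + vdot m z)) = (\<Prod>i\<in>UNIV. \<Sum>a\<in>UNIV. chi (r * (a * a) + z $ i * a))"
    unfolding e chi_sum by (rule sum_vec_prod)
  also have "\<dots> = (\<Prod>i\<in>UNIV. G r * chi (- (z $ i * z $ i) / (4 * r)))"
    by (intro prod.cong refl G_complete r)
  also have "\<dots> = G r ^ CARD('n) * chi (\<Sum>i\<in>UNIV. - (z $ i * z $ i) / (4 * r))"
    by (simp add: prod.distrib chi_sum)
  also have "(\<Sum>i\<in>UNIV. - (z $ i * z $ i) / (4 * r)) = - ffnorm z / (4 * r)"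
    by (simp add: ffnorm_sum sum_divide_distrib[symmetric] sum_negf)
  finally show ?thesis .
qed

lemma eta_pow_odd: "odd k \<Longrightarrow> (r::'a) \<noteq> 0 \<Longrightarrow> eta r ^ k = eta r"
proof -
  assume k: "odd k" and r: "r \<noteq> 0"
  then obtain j where j: "k = 2 * j + 1" by (metis oddE)
  have "eta r ^ k = (eta r * eta r) ^ j * eta r"
    unfolding j by (simp add: power_mult power2_eq_square)
  then show ?thesis using eta_sq_nz[OF r] by simp
qed

lemma sphere_sum:
  fixes z :: "'a ^ 'n" and u :: 'a
  assumes d: "odd CARD('n)"
  shows "(\<Sum>m\<in>{m. ffnorm m = u}. chi (vdot m z)) =
         (if z = 0 then of_nat CARD('a) ^ CARD('n) / of_nat CARD('a) else 0) +
         G 1 ^ CARD('n) / of_nat CARD('a) * (\<Sum>r\<in>UNIV. eta r * chi ((- u) * r + (- ffnorm z / 4) / r))"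
proof -
  define q where "q = (of_nat CARD('a) :: complex)"
  have q0: "q \<noteq> 0" by (simp add: q_def)
  have "(\<Sum>m\<in>{m. ffnorm m = u}. chi (vdot m z)) = (\<Sum>m\<in>UNIV. (if ffnorm m = u then 1 else 0) * chi (vdot m z))"
  proof -
    have "(\<Sum>m\<in>{m. ffnorm m = u}. chi (vdot m z)) = (\<Sum>m\<in>{m\<in>UNIV. ffnorm m = u}. chi (vdot m z))" by simp
    also have "\<dots> = (\<Sum>m\<in>UNIV. if ffnorm m = u then chi (vdot m z) else 0)"
      by (rule sum.inter_filter) simp
    also have "\<dots> = (\<Sum>m\<in>UNIV. (if ffnorm m = u then 1 else 0) * chi (vdot m z))"
      by (rule sum.cong) auto
    finally show ?thesis .
  qed
  also have "\<dots> = (\<Sum>m\<in>UNIV. ((\<Sum>s\<in>UNIV. chi (s * (ffnorm m - u))) / q) * chi (vdot m z))"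
  proof (rule sum.cong[OF refl])
    fix m :: "'a^'n"
    have "(if ffnorm m = u then 1 else 0) = (\<Sum>s\<in>UNIV. chi (s * (ffnorm m - u))) / q"
      unfolding indicator_chi using q0 by (simp add: q_def)
    then show "(if ffnorm m = u then 1 else 0) * chi (vdot m z) = ((\<Sum>s\<in>UNIV. chi (s * (ffnorm m - u))) / q) * chi (vdot m z)"
      by simp
  qed
  also have "\<dots> = (\<Sum>m\<in>UNIV. \<Sum>s\<in>UNIV. chi (s * ffnorm m + vdot m z) * chi (- (u * s))) / q"
  proof -
    have h: "chi (s * (ffnorm m - u)) * chi (vdot m z) = chi (s * ffnorm m + vdot m z) * chi (- (u * s))"
      for m :: "'a^'n" and s
      by (simp add: chi_add[symmetric] algebra_simps)
    have "(\<Sum>m\<in>UNIV. ((\<Sum>s\<in>UNIV. chi (s * (ffnorm m - u))) / q) * chi (vdot m z)) =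
          (\<Sum>m\<in>UNIV. (\<Sum>s\<in>UNIV. chi (s * (ffnorm m - u)) * chi (vdot m z)) / q)"
      by (intro sum.cong refl) (simp add: sum_distrib_right)
    also have "\<dots> = (\<Sum>m\<in>UNIV. \<Sum>s\<in>UNIV. chi (s * (ffnorm m - u)) * chi (vdot m z)) / q"
      by (rule sum_divide_distrib[symmetric])
    also have "\<dots> = (\<Sum>m\<in>UNIV. \<Sum>s\<in>UNIV. chi (s * ffnorm m + vdot m z) * chi (- (u * s))) / q"
      by (simp only: h)
    finally show ?thesis .
  qed
  also have "\<dots> = (\<Sum>s\<in>UNIV. \<Sum>m\<in>UNIV. chi (s * ffnorm m + vdot m z) * chi (- (u * s))) / q"
    by (subst sum.swap) (rule refl)
  also have "\<dots> = ((\<Sum>m\<in>UNIV. chi (0 * ffnorm m + vdot m z) * chi (- (u * 0))) +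
       (\<Sum>s\<in>-{0}. \<Sum>m\<in>UNIV. chi (s * ffnorm m + vdot m z) * chi (- (u * s)))) / q"
    by (subst sum_split0[of "\<lambda>s. \<Sum>m\<in>UNIV. chi (s * ffnorm m + vdot m z) * chi (- (u * s))"]) (rule refl)
  also have "(\<Sum>m\<in>UNIV. chi (0 * ffnorm m + vdot m z) * chi (- (u * 0))) = (if z = 0 then of_nat CARD('a) ^ CARD('n) else 0)"
    using vec_orth[of z] by (simp add: chi_0)
  also have "(\<Sum>s\<in>-{0}. \<Sum>m\<in>UNIV. chi (s * ffnorm m + vdot m z) * chi (- (u * s))) =
             (\<Sum>s\<in>-{0}. G 1 ^ CARD('n) * (eta s * chi ((- u) * s + (- ffnorm z / 4) / s)))"
  proof (rule sum.cong[OF refl])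
    fix s :: 'a assume "s \<in> -{0}"
    then have s: "s \<noteq> 0" by simp
    have "(\<Sum>m\<in>UNIV. chi (s * ffnorm m + vdot m z) * chi (- (u * s))) =
          (\<Sum>m\<in>UNIV. chi (s * ffnorm m + vdot m z)) * chi (- (u * s))"
      by (simp add: sum_distrib_right)
    also have "\<dots> = G s ^ CARD('n) * chi (- ffnorm z / (4 * s)) * chi (- (u * s))"
      using vec_gauss[OF s, of z] by simp
    also have "G s ^ CARD('n) = eta s * G 1 ^ CARD('n)"
      using G_mult[OF s] eta_pow_odd[OF d s] by (simp add: power_mult_distrib)
    also have "eta s * G 1 ^ CARD('n) * chi (- ffnorm z / (4 * s)) * chi (- (u * s)) =
               G 1 ^ CARD('n) * (eta s * chi ((- u) * s + (- ffnorm z / 4) / s))"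
    proof -
      have "- ffnorm z / (4 * s) + - (u * s) = (- u) * s + (- ffnorm z / 4) / s"
        by (simp add: field_simps)
      then show ?thesis by (simp add: chi_add[symmetric] mult_ac)
    qed
    finally show "(\<Sum>m\<in>UNIV. chi (s * ffnorm m + vdot m z) * chi (- (u * s))) =
          G 1 ^ CARD('n) * (eta s * chi ((- u) * s + (- ffnorm z / 4) / s))" .
  qed
  also have "\<dots> = G 1 ^ CARD('n) * (\<Sum>s\<in>UNIV. eta s * chi ((- u) * s + (- ffnorm z / 4) / s))"
  proof -
    have "(\<Sum>s\<in>UNIV. eta s * chi ((- u) * s + (- ffnorm z / 4) / s)) =
          eta (0::'a) * chi ((- u) * 0 + (- ffnorm z / 4) / 0) + (\<Sum>s\<in>-{0}. eta s * chi ((- u) * s + (- ffnorm z / 4) / s))"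
      by (rule sum_split0[of "\<lambda>s. eta s * chi ((- u) * s + (- ffnorm z / 4) / s)"])
    then have "(\<Sum>s\<in>UNIV. eta s * chi ((- u) * s + (- ffnorm z / 4) / s)) =
          (\<Sum>s\<in>-{0}. eta s * chi ((- u) * s + (- ffnorm z / 4) / s))" by simp
    then show ?thesis by (simp only: sum_distrib_left)
  qed
  finally show ?thesis by (simp add: q_def add_divide_distrib)
qed

lemma sphere_bound:
  fixes z :: "'a ^ 'n" and u :: 'a
  assumes d: "odd CARD('n)"
  shows "norm ((\<Sum>m\<in>{m. ffnorm m = u}. chi (vdot m z)) -
         (if z = 0 then of_nat CARD('a) ^ CARD('n) / of_nat CARD('a) else 0))
         \<le> 2 * sqrt (real CARD('a)) ^ (CARD('n) - 1)"
proof -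
  define sq where "sq = sqrt (real CARD('a))"
  have sq0: "sq > 0" by (simp add: sq_def)
  have qsq: "real CARD('a) = sq * sq" by (simp add: sq_def)
  have "norm ((\<Sum>m\<in>{m. ffnorm m = u}. chi (vdot m z)) -
         (if z = 0 then of_nat CARD('a) ^ CARD('n) / of_nat CARD('a) else 0))
     = norm (G 1 ^ CARD('n) / of_nat CARD('a) * (\<Sum>r\<in>UNIV. eta r * chi ((- u) * r + (- ffnorm z / 4) / r)))"
    unfolding sphere_sum[OF d] by simp
  also have "\<dots> = sq ^ CARD('n) / real CARD('a) * norm (\<Sum>r\<in>UNIV. eta r * chi ((- u) * r + (- ffnorm z / 4) / r))"
    by (simp add: norm_mult norm_divide norm_power G_norm sq_def)
  also have "\<dots> \<le> sq ^ CARD('n) / real CARD('a) * (2 * sq)"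
    by (intro mult_left_mono salie_bound[unfolded sq_def[symmetric]]) (simp add: sq0 less_imp_le)
  also have "\<dots> = 2 * sq ^ (CARD('n) - 1)"
  proof -
    have "CARD('n) = Suc (CARD('n) - 1)" by simp
    then have "sq ^ CARD('n) * sq = sq ^ (CARD('n) - 1) * (sq * sq)"
      by (metis power_Suc mult.assoc mult.commute)
    then show ?thesis unfolding qsq using sq0 by (simp add: field_simps)
  qed
  finally show ?thesis by (simp add: sq_def)
qed

end

lemma cmod_sq_cnj: "w * cnj w = complex_of_real ((cmod w)\<^sup>2)"
  by (rule complex_norm_square[symmetric])

context fchar
begin

lemma parseval1_c:
  fixes A :: "'a \<Rightarrow> complex"
  shows "(\<Sum>r\<in>UNIV. (\<Sum>u\<in>UNIV. chi (r * u) * A u) * cnj (\<Sum>u\<in>UNIV. chi (r * u) * A u)) =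
         of_nat CARD('a) * (\<Sum>u\<in>UNIV. A u * cnj (A u))"
proof -
  have "(\<Sum>r\<in>UNIV. (\<Sum>u\<in>UNIV. chi (r * u) * A u) * cnj (\<Sum>u\<in>UNIV. chi (r * u) * A u)) =
        (\<Sum>r\<in>UNIV. \<Sum>u\<in>UNIV. \<Sum>v\<in>UNIV. A u * cnj (A v) * chi (r * (u - v)))"
  proof (rule sum.cong[OF refl])
    fix r :: 'a
    have h: "chi (r * u) * A u * (cnj (chi (r * v)) * cnj (A v)) = A u * cnj (A v) * chi (r * (u - v))" for u v
      by (simp add: right_diff_distrib chi_diff mult_ac)
    show "(\<Sum>u\<in>UNIV. chi (r * u) * A u) * cnj (\<Sum>u\<in>UNIV. chi (r * u) * A u) =
          (\<Sum>u\<in>UNIV. \<Sum>v\<in>UNIV. A u * cnj (A v) * chi (r * (u - v)))"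
      unfolding cnj_sum sum_product complex_cnj_mult h by (rule refl)
  qed
  also have "\<dots> = (\<Sum>u\<in>UNIV. \<Sum>r\<in>UNIV. \<Sum>v\<in>UNIV. A u * cnj (A v) * chi (r * (u - v)))"
    by (rule sum.swap)
  also have "\<dots> = (\<Sum>u\<in>UNIV. \<Sum>v\<in>UNIV. \<Sum>r\<in>UNIV. A u * cnj (A v) * chi (r * (u - v)))"
    by (intro sum.cong refl sum.swap)
  also have "\<dots> = (\<Sum>u\<in>UNIV. \<Sum>v\<in>UNIV. A u * cnj (A v) * (if u = v then of_nat CARD('a) else 0))"
    by (intro sum.cong refl) (simp add: sum_distrib_left[symmetric] indicator_chi[of _ _] mult.commute)
  also have "\<dots> = (\<Sum>u\<in>UNIV. A u * cnj (A u) * of_nat CARD('a))"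
  proof (rule sum.cong[OF refl])
    fix u :: 'a
    have "(\<Sum>v\<in>UNIV. A u * cnj (A v) * (if u = v then of_nat CARD('a) else 0)) =
          (\<Sum>v\<in>UNIV. if v = u then A u * cnj (A v) * of_nat CARD('a) else 0)"
      by (rule sum.cong) auto
    also have "\<dots> = A u * cnj (A u) * of_nat CARD('a)" by (simp add: sum.delta)
    finally show "(\<Sum>v\<in>UNIV. A u * cnj (A v) * (if u = v then of_nat CARD('a) else 0)) = A u * cnj (A u) * of_nat CARD('a)" .
  qed
  also have "\<dots> = of_nat CARD('a) * (\<Sum>u\<in>UNIV. A u * cnj (A u))"
    by (simp add: sum_distrib_left mult.commute)
  finally show ?thesis .
qed

lemma parseval1:
  fixes A :: "'a \<Rightarrow> complex"
  shows "(\<Sum>r\<in>UNIV. (cmod (\<Sum>u\<in>UNIV. chi (r * u) * A u))\<^sup>2) = real CARD('a) * (\<Sum>u\<in>UNIV. (cmod (A u))\<^sup>2)"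
proof -
  have "complex_of_real (\<Sum>r\<in>UNIV. (cmod (\<Sum>u\<in>UNIV. chi (r * u) * A u))\<^sup>2) =
        complex_of_real (real CARD('a) * (\<Sum>u\<in>UNIV. (cmod (A u))\<^sup>2))"
  proof -
    have e1: "complex_of_real (\<Sum>r\<in>UNIV. (cmod (\<Sum>u\<in>UNIV. chi (r * u) * A u))\<^sup>2) =
      (\<Sum>r\<in>UNIV. (\<Sum>u\<in>UNIV. chi (r * u) * A u) * cnj (\<Sum>u\<in>UNIV. chi (r * u) * A u))"
      by (simp only: cmod_sq_cnj of_real_sum)
    have e2: "complex_of_real (real CARD('a) * (\<Sum>u\<in>UNIV. (cmod (A u))\<^sup>2)) =
      of_nat CARD('a) * (\<Sum>u\<in>UNIV. A u * cnj (A u))"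
      by (simp only: cmod_sq_cnj of_real_sum of_real_mult of_real_of_nat_eq)
    show ?thesis using parseval1_c[of A] e1 e2 by simp
  qed
  then show ?thesis by (simp only: of_real_eq_iff)
qed

definition alpha :: "('a ^ 'n) set \<Rightarrow> 'a ^ 'n \<Rightarrow> complex" where
  "alpha A m = (\<Sum>x\<in>A. chi (vdot m x))"

lemma alpha_sq: "alpha A m * cnj (alpha A m) = (\<Sum>x\<in>A. \<Sum>y\<in>A. chi (vdot m (x - y)))"
  unfolding alpha_def cnj_sum sum_product by (simp add: vdot_diff chi_diff)

lemma plancherel_c:
  fixes A :: "('a ^ 'n) set"
  shows "(\<Sum>m\<in>UNIV. alpha A m * cnj (alpha A m)) = of_nat CARD('a) ^ CARD('n) * of_nat (card A)"
proof -
  have "(\<Sum>m\<in>UNIV. alpha A m * cnj (alpha A m)) = (\<Sum>m\<in>UNIV. \<Sum>x\<in>A. \<Sum>y\<in>A. chi (vdot m (x - y)))"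
    by (simp only: alpha_sq)
  also have "\<dots> = (\<Sum>x\<in>A. \<Sum>m\<in>UNIV. \<Sum>y\<in>A. chi (vdot m (x - y)))"
    by (rule sum.swap)
  also have "\<dots> = (\<Sum>x\<in>A. \<Sum>y\<in>A. \<Sum>m\<in>UNIV. chi (vdot m (x - y)))"
    by (intro sum.cong refl sum.swap)
  also have "\<dots> = (\<Sum>x\<in>A. \<Sum>y\<in>A. if y = x then of_nat CARD('a) ^ CARD('n) else 0)"
    by (intro sum.cong refl) (auto simp: vec_orth)
  also have "\<dots> = (\<Sum>x\<in>A. of_nat CARD('a) ^ CARD('n))"
    by (intro sum.cong refl) (simp add: sum.delta)
  also have "\<dots> = of_nat CARD('a) ^ CARD('n) * of_nat (card A)" by (simp add: mult.commute)
  finally show ?thesis .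
qed

lemma plancherel:
  fixes A :: "('a ^ 'n) set"
  shows "(\<Sum>m\<in>UNIV. (cmod (alpha A m))\<^sup>2) = real CARD('a) ^ CARD('n) * real (card A)"
proof -
  have "complex_of_real (\<Sum>m\<in>UNIV. (cmod (alpha A m))\<^sup>2) = complex_of_real (real CARD('a) ^ CARD('n) * real (card A))"
  proof -
    have e1: "complex_of_real (\<Sum>m\<in>UNIV. (cmod (alpha A m))\<^sup>2) = (\<Sum>m\<in>UNIV. alpha A m * cnj (alpha A m))"
      by (simp only: cmod_sq_cnj of_real_sum)
    have e2: "complex_of_real (real CARD('a) ^ CARD('n) * real (card A)) = of_nat CARD('a) ^ CARD('n) * of_nat (card A)"
      by simp
    show ?thesis using plancherel_c[of A] e1 e2 by simp
  qed
  then show ?thesis by (simp only: of_real_eq_iff)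
qed

lemma sphere_mass_bound:
  fixes A :: "('a ^ 'n) set" and u :: 'a
  assumes d: "odd CARD('n)"
  shows "(\<Sum>m\<in>{m. ffnorm m = u}. (cmod (alpha A m))\<^sup>2) \<le>
         real CARD('a) ^ (CARD('n) - 1) * real (card A) + 2 * sqrt (real CARD('a)) ^ (CARD('n) - 1) * real (card A) ^ 2"
proof -
  define S where "S = {m::'a^'n. ffnorm m = u}"
  define T where "T = (\<lambda>z::'a^'n. \<Sum>m\<in>S. chi (vdot m z))"
  define c where "c = (\<lambda>z::'a^'n. if z = 0 then of_nat CARD('a) ^ CARD('n) / of_nat CARD('a) else (0::complex))"
  define B where "B = 2 * sqrt (real CARD('a)) ^ (CARD('n) - 1)"
  have Tb: "cmod (T z) \<le> cmod (c z) + B" for z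
  proof -
    have "cmod (T z) \<le> cmod (T z - c z) + cmod (c z)" using norm_triangle_sub[of "T z" "c z"] by linarith
    also have "cmod (T z - c z) \<le> B" unfolding T_def c_def B_def S_def by (rule sphere_bound[OF d])
    finally show ?thesis by simp
  qed
  have cq: "cmod (c z) = (if z = 0 then real CARD('a) ^ (CARD('n) - 1) else 0)" for z
  proof -
    have "CARD('n) = Suc (CARD('n) - 1)" by simp
    then have "(of_nat CARD('a) :: complex) ^ CARD('n) / of_nat CARD('a) = of_nat CARD('a) ^ (CARD('n) - 1)"
      by (metis power_Suc nonzero_mult_div_cancel_left of_nat_eq_0_iff zero_less_card_finite
                less_irrefl mult.commute)
    then show ?thesis unfolding c_def by (simp add: norm_power)
  qed
  have "complex_of_real (\<Sum>m\<in>S. (cmod (alpha A m))\<^sup>2) = (\<Sum>m\<in>S. alpha A m * cnj (alpha A m))"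
    by (simp only: cmod_sq_cnj of_real_sum)
  also have "\<dots> = (\<Sum>m\<in>S. \<Sum>x\<in>A. \<Sum>y\<in>A. chi (vdot m (x - y)))" by (simp only: alpha_sq)
  also have "\<dots> = (\<Sum>x\<in>A. \<Sum>m\<in>S. \<Sum>y\<in>A. chi (vdot m (x - y)))" by (rule sum.swap)
  also have "\<dots> = (\<Sum>x\<in>A. \<Sum>y\<in>A. T (x - y))" unfolding T_def by (intro sum.cong refl sum.swap)
  finally have eq: "complex_of_real (\<Sum>m\<in>S. (cmod (alpha A m))\<^sup>2) = (\<Sum>x\<in>A. \<Sum>y\<in>A. T (x - y))" .
  have nn: "0 \<le> (\<Sum>m\<in>S. (cmod (alpha A m))\<^sup>2)" by (simp add: sum_nonneg)
  have "(\<Sum>m\<in>S. (cmod (alpha A m))\<^sup>2) = cmod (complex_of_real (\<Sum>m\<in>S. (cmod (alpha A m))\<^sup>2))"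
    by (simp only: norm_of_real abs_of_nonneg[OF nn])
  also have "\<dots> \<le> (\<Sum>x\<in>A. \<Sum>y\<in>A. cmod (T (x - y)))"
    unfolding eq by (rule order.trans[OF norm_sum sum_mono[OF norm_sum]])
  also have "\<dots> \<le> (\<Sum>x\<in>A. \<Sum>y\<in>A. cmod (c (x - y)) + B)"
    by (intro sum_mono Tb)
  also have "\<dots> = (\<Sum>x\<in>A. real CARD('a) ^ (CARD('n) - 1) + real (card A) * B)"
  proof (rule sum.cong[OF refl])
    fix x assume x: "x \<in> A"
    have "(\<Sum>y\<in>A. cmod (c (x - y)) + B) = (\<Sum>y\<in>A. cmod (c (x - y))) + real (card A) * B"
      by (simp add: sum.distrib)
    also have "(\<Sum>y\<in>A. cmod (c (x - y))) = (\<Sum>y\<in>A. if y = x then real CARD('a) ^ (CARD('n) - 1) else 0)"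
      by (intro sum.cong refl) (auto simp: cq)
    also have "\<dots> = real CARD('a) ^ (CARD('n) - 1)" using x by (simp add: sum.delta)
    finally show "(\<Sum>y\<in>A. cmod (c (x - y)) + B) = real CARD('a) ^ (CARD('n) - 1) + real (card A) * B" .
  qed
  also have "\<dots> = real CARD('a) ^ (CARD('n) - 1) * real (card A) + B * real (card A) ^ 2"
    by (simp add: sum.distrib power2_eq_square algebra_simps)
  finally show ?thesis unfolding S_def B_def by simp
qed

lemma sphere_mass_bound_triv:
  fixes A :: "('a ^ 'n) set" and u :: 'a
  shows "(\<Sum>m\<in>{m. ffnorm m = u}. (cmod (alpha A m))\<^sup>2) \<le> real CARD('a) ^ CARD('n) * real (card A)"
proof -
  have "(\<Sum>m\<in>{m. ffnorm m = u}. (cmod (alpha A m))\<^sup>2) \<le> (\<Sum>m\<in>UNIV. (cmod (alpha A m))\<^sup>2)"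
    by (rule sum_mono2) auto
  then show ?thesis using plancherel[of A] by simp
qed

end

context fchar
begin

definition Np :: "('a ^ 'n) \<times> ('a ^ 'n) \<Rightarrow> 'a" where
  "Np p = ffnorm (fst p - snd p)"

definition nu :: "('a ^ 'n) set \<Rightarrow> ('a ^ 'n) set \<Rightarrow> 'a \<Rightarrow> nat" where
  "nu E F t = card {p \<in> E \<times> F. Np p = t}"

definition Phi :: "('a ^ 'n) set \<Rightarrow> ('a ^ 'n) set \<Rightarrow> 'a \<Rightarrow> complex" where
  "Phi E F s = (\<Sum>p\<in>E \<times> F. chi (s * Np p))"

definition Psi :: "('a ^ 'n) set \<Rightarrow> ('a ^ 'n) set \<Rightarrow> 'a \<Rightarrow> complex" where
  "Psi E F r = (\<Sum>m\<in>UNIV. chi (r * ffnorm m) * (alpha E m * cnj (alpha F m)))"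

definition Aq :: "('a ^ 'n) set \<Rightarrow> ('a ^ 'n) set \<Rightarrow> 'a \<Rightarrow> complex" where
  "Aq E F u = (\<Sum>m\<in>{m. ffnorm m = u}. alpha E m * cnj (alpha F m))"

lemma Phi_group:
  fixes E F :: "('a ^ 'n::finite) set"
  shows "Phi E F s = (\<Sum>t\<in>UNIV. chi (s * t) * of_nat (nu E F t))"
proof -
  have "Phi E F s = (\<Sum>t\<in>UNIV. \<Sum>p\<in>{p\<in>E \<times> F. Np p = t}. chi (s * Np p))"
    unfolding Phi_def by (rule sum.group[symmetric]) auto
  also have "\<dots> = (\<Sum>t\<in>UNIV. chi (s * t) * of_nat (nu E F t))"
  proof (rule sum.cong[OF refl])
    fix t
    have "(\<Sum>p\<in>{p\<in>E \<times> F. Np p = t}. chi (s * Np p)) = (\<Sum>p\<in>{p\<in>E \<times> F. Np p = t}. chi (s * t))"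
      by (rule sum.cong) auto
    then show "(\<Sum>p\<in>{p\<in>E \<times> F. Np p = t}. chi (s * Np p)) = chi (s * t) * of_nat (nu E F t)"
      by (simp add: nu_def mult.commute)
  qed
  finally show ?thesis .
qed

lemma Q_parseval:
  fixes E F :: "('a ^ 'n::finite) set"
  shows "(\<Sum>s\<in>UNIV. (cmod (Phi E F s))\<^sup>2) = real CARD('a) * (\<Sum>t\<in>UNIV. (real (nu E F t))\<^sup>2)"
  unfolding Phi_group using parseval1[of "\<lambda>t. of_nat (nu E F t)"] by simp

lemma Phi_0:
  fixes E F :: "('a ^ 'n::finite) set"
  shows "Phi E F 0 = of_nat (card E * card F)"
  by (simp add: Phi_def chi_0 card_cartesian_product)

lemma sum_prod_pair:
  "(\<Sum>p\<in>A \<times> B. f (fst p) * g (snd p)) = (\<Sum>x\<in>A. f x) * (\<Sum>y\<in>B. (g y :: complex))"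
  by (simp add: sum_product sum.cartesian_product case_prod_beta)

lemma Phi_Psi:
  fixes E F :: "('a ^ 'n::finite) set"
  assumes s: "s \<noteq> 0"
  shows "G (- 1 / (4 * s)) ^ CARD('n) * Phi E F s = Psi E F (- 1 / (4 * s))"
proof -
  define r where "r = - 1 / (4 * s)"
  have r: "r \<noteq> 0" unfolding r_def using s four_nz by simp
  have key: "G r ^ CARD('n) * chi (s * ffnorm z) = (\<Sum>m\<in>UNIV. chi (r * ffnorm m + vdot m z))" for z :: "'a^'n"
  proof -
    have "- ffnorm z / (4 * r) = s * ffnorm z" unfolding r_def using s four_nz by (simp add: field_simps)
    then show ?thesis using vec_gauss[OF r, of z] by simp
  qed
  have "G r ^ CARD('n) * Phi E F s = (\<Sum>p\<in>E \<times> F. \<Sum>m\<in>UNIV. chi (r * ffnorm m + vdot m (fst p - snd p)))"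
    unfolding Phi_def sum_distrib_left Np_def key by (rule refl)
  also have "\<dots> = (\<Sum>m\<in>UNIV. \<Sum>p\<in>E \<times> F. chi (r * ffnorm m) * (chi (vdot m (fst p)) * cnj (chi (vdot m (snd p)))))"
    by (subst sum.swap) (simp add: chi_add vdot_diff chi_diff)
  also have "\<dots> = (\<Sum>m\<in>UNIV. chi (r * ffnorm m) * (alpha E m * cnj (alpha F m)))"
  proof (rule sum.cong[OF refl])
    fix m :: "'a^'n"
    have e: "(\<Sum>p\<in>E \<times> F. chi (vdot m (fst p)) * cnj (chi (vdot m (snd p)))) = alpha E m * cnj (alpha F m)"
      unfolding alpha_def cnj_sum by (rule sum_prod_pair)
    show "(\<Sum>p\<in>E \<times> F. chi (r * ffnorm m) * (chi (vdot m (fst p)) * cnj (chi (vdot m (snd p))))) =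
               chi (r * ffnorm m) * (alpha E m * cnj (alpha F m))"
      unfolding sum_distrib_left[symmetric] e by (rule refl)
  qed
  finally show ?thesis unfolding r_def Psi_def .
qed

lemma Psi_group:
  fixes E F :: "('a ^ 'n::finite) set"
  shows "Psi E F r = (\<Sum>u\<in>UNIV. chi (r * u) * Aq E F u)"
proof -
  have "Psi E F r = (\<Sum>u\<in>UNIV. \<Sum>m\<in>{m\<in>UNIV. ffnorm m = u}. chi (r * ffnorm m) * (alpha E m * cnj (alpha F m)))"
    unfolding Psi_def by (rule sum.group[symmetric]) auto
  also have "\<dots> = (\<Sum>u\<in>UNIV. chi (r * u) * Aq E F u)"
  proof (rule sum.cong[OF refl])
    fix u
    have "(\<Sum>m\<in>{m\<in>UNIV. ffnorm m = u}. chi (r * ffnorm m) * (alpha E m * cnj (alpha F m))) =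
          (\<Sum>m\<in>{m. ffnorm m = u}. chi (r * u) * (alpha E m * cnj (alpha F m)))"
      by (rule sum.cong) auto
    then show "(\<Sum>m\<in>{m\<in>UNIV. ffnorm m = u}. chi (r * ffnorm m) * (alpha E m * cnj (alpha F m))) = chi (r * u) * Aq E F u"
      by (simp add: Aq_def sum_distrib_left)
  qed
  finally show ?thesis .
qed

lemma Aq_CS:
  fixes E F :: "('a ^ 'n::finite) set"
  shows "(cmod (Aq E F u))\<^sup>2 \<le> (\<Sum>m\<in>{m. ffnorm m = u}. (cmod (alpha E m))\<^sup>2) * (\<Sum>m\<in>{m. ffnorm m = u}. (cmod (alpha F m))\<^sup>2)"
proof -
  define S where "S = {m::'a^'n. ffnorm m = u}"
  have "cmod (Aq E F u) \<le> (\<Sum>m\<in>S. cmod (alpha E m) * cmod (alpha F m))"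
    unfolding Aq_def S_def[symmetric]
    by (rule order.trans[OF norm_sum]) (simp add: norm_mult)
  then have "(cmod (Aq E F u))\<^sup>2 \<le> (\<Sum>m\<in>S. cmod (alpha E m) * cmod (alpha F m))\<^sup>2"
    by (intro power_mono) auto
  also have "\<dots> \<le> (\<Sum>m\<in>S. (cmod (alpha E m))\<^sup>2) * (\<Sum>m\<in>S. (cmod (alpha F m))\<^sup>2)"
    by (rule Cauchy_Schwarz_ineq_sum)
  finally show ?thesis unfolding S_def .
qed

lemma sum_spheres: "(\<Sum>u\<in>UNIV. \<Sum>m\<in>{m. ffnorm m = u}. f m) = (\<Sum>m\<in>(UNIV::('a^'n) set). f m)"
proof -
  have "(\<Sum>u\<in>UNIV. \<Sum>m\<in>{m\<in>UNIV. ffnorm m = u}. f m) = (\<Sum>m\<in>(UNIV::('a^'n) set). f m)"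
    by (rule sum.group) auto
  then show ?thesis by simp
qed

lemma nonzero_part:
  fixes E F :: "('a ^ 'n::finite) set"
  shows "(\<Sum>s\<in>-{0}. (cmod (Phi E F s))\<^sup>2) * real CARD('a) ^ CARD('n) = (\<Sum>r\<in>-{0}. (cmod (Psi E F r))\<^sup>2)"
proof -
  have "(\<Sum>s\<in>-{0}. (cmod (Phi E F s))\<^sup>2) * real CARD('a) ^ CARD('n) =
        (\<Sum>s\<in>-{0}. (cmod (Psi E F (- 1 / (4 * s))))\<^sup>2)"
    unfolding sum_distrib_right
  proof (rule sum.cong[OF refl])
    fix s :: 'a assume "s \<in> -{0}"
    then have s: "s \<noteq> 0" by simp
    have r: "- 1 / (4 * s) \<noteq> 0" using s four_nz by simp
    have "cmod (Psi E F (- 1 / (4 * s))) = cmod (G (- 1 / (4 * s))) ^ CARD('n) * cmod (Phi E F s)"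
      unfolding Phi_Psi[OF s, symmetric] by (simp add: norm_mult norm_power)
    also have "\<dots> = sqrt (real CARD('a)) ^ CARD('n) * cmod (Phi E F s)" by (subst G_norm[OF r]) (rule refl)
    finally have "(cmod (Psi E F (- 1 / (4 * s))))\<^sup>2 = (sqrt (real CARD('a)) ^ CARD('n))\<^sup>2 * (cmod (Phi E F s))\<^sup>2"
      by (simp add: power_mult_distrib)
    also have "(sqrt (real CARD('a)) ^ CARD('n))\<^sup>2 = real CARD('a) ^ CARD('n)"
      by (simp add: power_mult[symmetric] mult.commute[of _ 2] power_mult)
    finally show "(cmod (Phi E F s))\<^sup>2 * real CARD('a) ^ CARD('n) = (cmod (Psi E F (- 1 / (4 * s))))\<^sup>2"
      by simp
  qed
  also have "\<dots> = (\<Sum>r\<in>-{0}. (cmod (Psi E F r))\<^sup>2)"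
    by (rule sum.reindex_bij_witness[of _ "\<lambda>r. - 1 / (4 * r)" "\<lambda>s. - 1 / (4 * s)"])
       (use four_nz in \<open>auto simp: field_simps\<close>)
  finally show ?thesis .
qed

lemma main_ineq:
  fixes E F :: "('a ^ 'n::finite) set"
  assumes Mb: "\<And>u. (\<Sum>m\<in>{m. ffnorm m = u}. (cmod (alpha E m))\<^sup>2) \<le> Mb"
  shows "real CARD('a) * (\<Sum>t\<in>UNIV. (real (nu E F t))\<^sup>2) \<le>
         (real (card E) * real (card F))\<^sup>2 + real CARD('a) * Mb * real (card F)"
proof -
  define q where "q = real CARD('a)"
  define d where "d = CARD('n)"
  have q0: "q > 0" by (simp add: q_def)
  have "real CARD('a) * (\<Sum>t\<in>UNIV. (real (nu E F t))\<^sup>2) = (\<Sum>s\<in>UNIV. (cmod (Phi E F s))\<^sup>2)"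
    by (rule Q_parseval[symmetric])
  also have "\<dots> = (cmod (Phi E F 0))\<^sup>2 + (\<Sum>s\<in>-{0}. (cmod (Phi E F s))\<^sup>2)"
    by (rule sum_split0)
  also have "(cmod (Phi E F 0))\<^sup>2 = (real (card E) * real (card F))\<^sup>2"
    unfolding Phi_0 by (simp del: of_nat_mult add: of_nat_mult[symmetric])
  also have "(\<Sum>s\<in>-{0}. (cmod (Phi E F s))\<^sup>2) \<le> q * Mb * real (card F)"
  proof -
    have "(\<Sum>s\<in>-{0}. (cmod (Phi E F s))\<^sup>2) * q ^ d = (\<Sum>r\<in>-{0}. (cmod (Psi E F r))\<^sup>2)"
      unfolding q_def d_def by (rule nonzero_part)
    also have "\<dots> \<le> (\<Sum>r\<in>UNIV. (cmod (Psi E F r))\<^sup>2)"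
      by (rule sum_mono2) auto
    also have "\<dots> = q * (\<Sum>u\<in>UNIV. (cmod (Aq E F u))\<^sup>2)"
      unfolding Psi_group q_def by (rule parseval1)
    also have "(\<Sum>u\<in>UNIV. (cmod (Aq E F u))\<^sup>2) \<le> (\<Sum>u\<in>UNIV. Mb * (\<Sum>m\<in>{m. ffnorm m = u}. (cmod (alpha F m))\<^sup>2))"
    proof (rule sum_mono)
      fix u :: 'a
      show "(cmod (Aq E F u))\<^sup>2 \<le> Mb * (\<Sum>m\<in>{m. ffnorm m = u}. (cmod (alpha F m))\<^sup>2)"
        by (rule order.trans[OF Aq_CS]) (intro mult_right_mono Mb sum_nonneg; simp)
    qed
    also have "\<dots> = Mb * (\<Sum>m\<in>UNIV. (cmod (alpha F m))\<^sup>2)"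
      by (simp add: sum_distrib_left[symmetric] sum_spheres)
    also have "\<dots> = Mb * (q ^ d * real (card F))"
      unfolding plancherel q_def d_def by simp
    finally have "(\<Sum>s\<in>-{0}. (cmod (Phi E F s))\<^sup>2) * q ^ d \<le> q * (Mb * (q ^ d * real (card F)))"
      using q0 by simp
    then have "(\<Sum>s\<in>-{0}. (cmod (Phi E F s))\<^sup>2) * q ^ d \<le> (q * Mb * real (card F)) * q ^ d"
      by (simp add: algebra_simps)
    then show ?thesis using q0 by simp
  qed
  finally show ?thesis unfolding q_def by simp
qed

lemma dist_set_image:
  fixes E F :: "('a ^ 'n::finite) set"
  shows "dist_set E F = Np ` (E \<times> F)"
  unfolding dist_set_def Np_def by force

lemma dist_CS:
  fixes E F :: "('a ^ 'n::finite) set"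
  shows "(real (card E) * real (card F))\<^sup>2 \<le> real (card (dist_set E F)) * (\<Sum>t\<in>UNIV. (real (nu E F t))\<^sup>2)"
proof -
  define D where "D = dist_set E F"
  have "(\<Sum>t\<in>D. \<Sum>p\<in>{p\<in>E \<times> F. Np p = t}. (1::real)) = (\<Sum>p\<in>E \<times> F. 1)"
    by (rule sum.group) (auto simp: D_def dist_set_image)
  then have s1: "(\<Sum>t\<in>D. real (nu E F t)) = real (card E) * real (card F)"
    by (simp add: nu_def card_cartesian_product)
  have c1: "(\<Sum>t\<in>D. 1 * real (nu E F t))\<^sup>2 \<le> (\<Sum>t\<in>D. 1\<^sup>2) * (\<Sum>t\<in>D. (real (nu E F t))\<^sup>2)"
    by (rule Cauchy_Schwarz_ineq_sum)
  have c2: "(\<Sum>t\<in>D. (real (nu E F t))\<^sup>2) \<le> (\<Sum>t\<in>UNIV. (real (nu E F t))\<^sup>2)"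
    by (rule sum_mono2) auto
  have "(real (card E) * real (card F))\<^sup>2 \<le> real (card D) * (\<Sum>t\<in>D. (real (nu E F t))\<^sup>2)"
    using c1 s1 by simp
  also have "\<dots> \<le> real (card D) * (\<Sum>t\<in>UNIV. (real (nu E F t))\<^sup>2)"
    using c2 by (rule mult_left_mono) simp
  finally show ?thesis by (simp add: D_def)
qed

lemma final_bound:
  fixes E F :: "('a ^ 'n::finite) set"
  assumes E: "E \<noteq> {}" and F: "F \<noteq> {}" and Mbp: "Mb > 0"
    and Mb: "\<And>u. (\<Sum>m\<in>{m. ffnorm m = u}. (cmod (alpha E m))\<^sup>2) \<le> Mb"
  shows "real (card (dist_set E F)) \<ge>
         min (real CARD('a) / 2) ((real (card E) * real (card F))\<^sup>2 / (2 * (Mb * real (card F))))"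
proof -
  define q where "q = real CARD('a)"
  define X where "X = (real (card E) * real (card F))\<^sup>2"
  define Y where "Y = Mb * real (card F)"
  define Qs where "Qs = (\<Sum>t\<in>UNIV. (real (nu E F t))\<^sup>2)"
  define D where "D = real (card (dist_set E F))"
  have q0: "q > 0" by (simp add: q_def)
  have cE: "card E > 0" using E by (simp add: card_gt_0_iff)
  have cF: "card F > 0" using F by (simp add: card_gt_0_iff)
  have X0: "X > 0" unfolding X_def using E F by simp
  have Y0: "Y > 0" unfolding Y_def using cF Mbp by (intro mult_pos_pos) auto
  have h1: "X \<le> D * Qs" unfolding X_def D_def Qs_def by (rule dist_CS)
  have h2: "q * Qs \<le> X + q * Y"
    using main_ineq[of E Mb F, OF Mb] unfolding q_def X_def Y_def Qs_def by (simp add: algebra_simps)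
  have D0: "D \<ge> 0" by (simp add: D_def)
  have Qs0: "Qs > 0"
  proof (rule ccontr)
    assume "\<not> Qs > 0"
    then have "D * Qs \<le> 0" using D0 by (simp add: mult_nonneg_nonpos)
    then show False using h1 X0 by simp
  qed
  have DQ: "X / Qs \<le> D" using h1 Qs0 by (simp add: pos_divide_le_eq)
  have h3: "Qs \<le> X / q + Y" using h2 q0 by (simp add: field_simps)
  show ?thesis
  proof (cases "X / q \<ge> Y")
    case True
    then have "Qs \<le> 2 * (X / q)" using h3 by simp
    then have "X / (2 * (X / q)) \<le> X / Qs"
      using Qs0 X0 q0 by (intro divide_left_mono) auto
    moreover have "X / (2 * (X / q)) = q / 2" using X0 q0 by (simp add: field_simps)
    ultimately have "q / 2 \<le> D" using DQ by simp
    then show ?thesis unfolding q_def D_def by simp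
  next
    case False
    then have "Qs \<le> 2 * Y" using h3 by simp
    then have "X / (2 * Y) \<le> X / Qs"
      using Qs0 X0 by (intro divide_left_mono) auto
    then have "X / (2 * Y) \<le> D" using DQ by simp
    then show ?thesis unfolding X_def Y_def D_def by simp
  qed
qed

end

lemma min_step: "(D::real) \<ge> min a b \<Longrightarrow> b' \<le> b \<Longrightarrow> D \<ge> min a b'"
  by (auto simp: min_def split: if_splits)

theorem mainTheorem1:
  fixes E F :: "(('a::{field,finite}) ^ 'n) set"
  defines "q \<equiv> CARD('a)" and "d \<equiv> CARD('n)"
  assumes "CHAR('a) > 2"
    and "odd d" and "d \<ge> 3"
    and "E \<noteq> {}" and "F \<noteq> {}"
  shows "(card E < q ^ ((d - 1) div 2) \<longrightarrow>
            real (card (dist_set E F)) \<ge>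
              min (real q / 2) (real (card E) * real (card F) / (8 * real q ^ (d - 1))))
       \<and> (q ^ ((d - 1) div 2) \<le> card E \<and> card E < q ^ ((d + 1) div 2) \<longrightarrow>
            real (card (dist_set E F)) \<ge>
              min (real q / 2) (real (card F) / (8 * real q ^ ((d - 1) div 2))))
       \<and> (q ^ ((d + 1) div 2) \<le> card E \<and> card E \<le> q ^ d \<longrightarrow>
            real (card (dist_set E F)) \<ge>
              min (real q / 2) (real (card E) * real (card F) / (2 * real q ^ d)))"
proof -
  note qd = assms(1) and dd = assms(2) and ch = assms(3) and od = assms(4)
  note En = assms(6) and Fn = assms(7)
  obtain chi :: "'a \<Rightarrow> complex" where ca: "\<And>x y. chi (x + y) = chi x * chi y"
    and cn: "\<And>x. norm (chi x) = 1" and ct: "\<exists>g. chi g \<noteq> 1"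
    using exists_char by blast
  have two: "(2::'a) \<noteq> 0"
  proof
    assume "(2::'a) = 0"
    then have "(of_nat 2 :: 'a) = 0" by simp
    then have "CHAR('a) dvd 2" by (simp only: of_nat_eq_0_iff_char_dvd)
    then have "CHAR('a) \<le> 2" by (simp add: dvd_imp_le)
    then show False using ch by simp
  qed
  interpret fchar chi
    by unfold_locales (use ca cn ct two in auto)
  have odn: "odd CARD('n)" using od dd by simp
  obtain k where dk: "CARD('n) = 2 * k + 1" using odn oddE by blast
  have dm1: "d - 1 = 2 * k" and dh: "(d - 1) div 2 = k" and dp: "(d + 1) div 2 = k + 1"
    using dk dd by auto
  define Q where "Q = real CARD('a)"
  have Q0: "Q > 0" by (simp add: Q_def)
  have qQ: "real q = Q" by (simp add: qd Q_def)
  have sqk: "sqrt Q ^ (CARD('n) - 1) = Q ^ k"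
  proof -
    have "sqrt Q ^ (CARD('n) - 1) = (sqrt Q ^ 2) ^ k" using dk by (simp add: power_mult)
    then show ?thesis using Q0 by simp
  qed
  have sqk2: "sqrt Q ^ (2 * k) = Q ^ k" using Q0 by (simp add: power_mult)
  define e where "e = real (card E)"
  define f where "f = real (card F)"
  have e0: "e > 0" unfolding e_def using En by (simp add: card_gt_0_iff)
  have f0: "f > 0" unfolding f_def using Fn by (simp add: card_gt_0_iff)
  have M1: "\<And>u. (\<Sum>m\<in>{m. ffnorm m = u}. (cmod (alpha E m))\<^sup>2) \<le> Q ^ (2 * k) * e + 2 * Q ^ k * e ^ 2"
    using sphere_mass_bound[OF odn, of E] unfolding e_def Q_def[symmetric] dk by (simp add: sqk2)
  have M3: "\<And>u. (\<Sum>m\<in>{m. ffnorm m = u}. (cmod (alpha E m))\<^sup>2) \<le> Q ^ d * e"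
    using sphere_mass_bound_triv[of E] unfolding e_def Q_def[symmetric] dd by simp
  have Qk0: "Q ^ k > 0" using Q0 by simp
  have c1: "card E < q ^ ((d - 1) div 2) \<longrightarrow>
            real (card (dist_set E F)) \<ge> min (real q / 2) (real (card E) * real (card F) / (8 * real q ^ (d - 1)))"
  proof
    assume "card E < q ^ ((d - 1) div 2)"
    then have "real (card E) < real (q ^ k)" unfolding dh by linarith
    then have ek: "e < Q ^ k" unfolding e_def qQ[symmetric] by simp
    define Mb where "Mb = 3 * Q ^ (2 * k) * e"
    have Mbp: "Mb > 0" unfolding Mb_def using Q0 e0 by simp
    have "2 * Q ^ k * e ^ 2 \<le> 2 * Q ^ (2 * k) * e"
    proof -
      have "Q ^ k * e * e \<le> Q ^ k * Q ^ k * e"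
        using ek Qk0 e0 by (intro mult_right_mono mult_left_mono) auto
      then show ?thesis by (simp add: power2_eq_square power_mult mult_ac)
    qed
    note ineq = this
    have Mb: "(\<Sum>m\<in>{m. ffnorm m = u}. (cmod (alpha E m))\<^sup>2) \<le> Mb" for u
      using M1[of u] ineq unfolding Mb_def by linarith
    have fb: "real (card (dist_set E F)) \<ge> min (real CARD('a) / 2) ((real (card E) * real (card F))\<^sup>2 / (2 * (Mb * real (card F))))"
      by (rule final_bound[OF En Fn Mbp Mb])
    have "(e * f)\<^sup>2 / (2 * (Mb * f)) = e * f / (6 * Q ^ (2 * k))"
      unfolding Mb_def using e0 f0 Q0 by (simp add: field_simps power2_eq_square)
    moreover have "e * f / (8 * Q ^ (2 * k)) \<le> e * f / (6 * Q ^ (2 * k))"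
      using e0 f0 Q0 by (intro divide_left_mono) auto
    ultimately have "e * f / (8 * Q ^ (2 * k)) \<le> (e * f)\<^sup>2 / (2 * (Mb * f))" by simp
    then show "real (card (dist_set E F)) \<ge> min (real q / 2) (real (card E) * real (card F) / (8 * real q ^ (d - 1)))"
      using min_step[OF fb] unfolding dm1 qQ e_def f_def Q_def by simp
  qed
  have c2: "q ^ ((d - 1) div 2) \<le> card E \<and> card E < q ^ ((d + 1) div 2) \<longrightarrow>
            real (card (dist_set E F)) \<ge> min (real q / 2) (real (card F) / (8 * real q ^ ((d - 1) div 2)))"
  proof
    assume "q ^ ((d - 1) div 2) \<le> card E \<and> card E < q ^ ((d + 1) div 2)"
    then have "real (q ^ k) \<le> real (card E)" unfolding dh by linarith
    then have ek: "Q ^ k \<le> e" unfolding e_def qQ[symmetric] by simp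
    define Mb where "Mb = 3 * Q ^ k * e ^ 2"
    have Mbp: "Mb > 0" unfolding Mb_def using Q0 e0 by simp
    have "Q ^ (2 * k) * e \<le> Q ^ k * e ^ 2"
    proof -
      have "Q ^ k * Q ^ k * e \<le> Q ^ k * e * e"
        using ek Qk0 e0 by (intro mult_right_mono mult_left_mono) auto
      then show ?thesis by (simp add: power2_eq_square power_mult mult_ac)
    qed
    note ineq = this
    have Mb: "(\<Sum>m\<in>{m. ffnorm m = u}. (cmod (alpha E m))\<^sup>2) \<le> Mb" for u
      using M1[of u] ineq unfolding Mb_def by linarith
    have fb: "real (card (dist_set E F)) \<ge> min (real CARD('a) / 2) ((real (card E) * real (card F))\<^sup>2 / (2 * (Mb * real (card F))))"
      by (rule final_bound[OF En Fn Mbp Mb])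
    have "(e * f)\<^sup>2 / (2 * (Mb * f)) = f / (6 * Q ^ k)"
      unfolding Mb_def using e0 f0 Q0 by (simp add: field_simps power2_eq_square)
    moreover have "f / (8 * Q ^ k) \<le> f / (6 * Q ^ k)"
      using f0 Q0 by (intro divide_left_mono) auto
    ultimately have "f / (8 * Q ^ k) \<le> (e * f)\<^sup>2 / (2 * (Mb * f))" by simp
    then show "real (card (dist_set E F)) \<ge> min (real q / 2) (real (card F) / (8 * real q ^ ((d - 1) div 2)))"
      using min_step[OF fb] unfolding dh qQ e_def f_def Q_def by simp
  qed
  have c3: "q ^ ((d + 1) div 2) \<le> card E \<and> card E \<le> q ^ d \<longrightarrow>
            real (card (dist_set E F)) \<ge> min (real q / 2) (real (card E) * real (card F) / (2 * real q ^ d))"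
  proof
    assume "q ^ ((d + 1) div 2) \<le> card E \<and> card E \<le> q ^ d"
    define Mb where "Mb = Q ^ d * e"
    have Mbp: "Mb > 0" unfolding Mb_def using Q0 e0 by simp
    have Mb: "\<And>u. (\<Sum>m\<in>{m. ffnorm m = u}. (cmod (alpha E m))\<^sup>2) \<le> Mb"
      using M3 unfolding Mb_def .
    have fb: "real (card (dist_set E F)) \<ge> min (real CARD('a) / 2) ((real (card E) * real (card F))\<^sup>2 / (2 * (Mb * real (card F))))"
      by (rule final_bound[OF En Fn Mbp Mb])
    have "(e * f)\<^sup>2 / (2 * (Mb * f)) = e * f / (2 * Q ^ d)"
      unfolding Mb_def using e0 f0 Q0 by (simp add: field_simps power2_eq_square)
    then show "real (card (dist_set E F)) \<ge> min (real q / 2) (real (card E) * real (card F) / (2 * real q ^ d))"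
      using fb unfolding qQ e_def f_def Q_def by simp
  qed
  show ?thesis using c1 c2 c3 by blast
qed

end
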